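(* Let $\rho$ be a quantum state on $L^2(\mathbb{R}^n)$ and let $\chi\in\mathcal{S}(\mathbb{R}^n)$ with $\|\chi\|_{L^2}=1$. If the matrix element $M_\rho:\mathbb{R}^{4n}\to\mathbb{C}$ is rapidly decaying, then $M_\rho$ is a Schwartz function on $\mathbb{R}^{4n}$.
   Context: A quantum state is a positive semidefinite trace-class operator $\rho$ on $L^2(\mathbb{R}^n)$. For $\xi=(\xi_x,\xi_p)\in\mathbb{R}^{2n}$, $(D_\xi\phi)(y)=e^{i(y-\xi_x/2)\cdot\xi_p}\phi(y-\xi_x)$; $\chi_\alpha:=D_\alpha\chi$; $M_\rho(\alpha,\beta):=\langle\chi_\alpha|\rho|\chi_\beta\rangle=\int\overline{\chi_\alpha(x)}(\rho\chi_\beta)(x)dx$ for $\alpha,\beta\in\mathbb{R}^{2n}$. For $F:\mathbb{R}^m\to\mathbb{C}$, $|F|_{a,b}:=\sup_z|z^a\partial_z^bF(z)|$; $F$ is rapidly decaying if $|F|_{a,0}<\infty$ for all multi-indices $a$, and Schwartz if $|F|_{a,b}<\infty$ for all $a,b$. *)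

theory Defs
  imports "HOL-Analysis.Analysis"
begin

text \<open>Monomial z^a for a multi-index a (only its values on the standard Basis matter).\<close>
definition monomial :: "('a::euclidean_space \<Rightarrow> nat) \<Rightarrow> 'a \<Rightarrow> real" where
  "monomial a z = (\<Prod>b\<in>Basis. (z \<bullet> b) ^ a b)"

fun iter_partial :: "'a::euclidean_space list \<Rightarrow> ('a \<Rightarrow> complex) \<Rightarrow> 'a \<Rightarrow> complex" where
  "iter_partial [] F = F"
| "iter_partial (v # vs) F = (\<lambda>z. frechet_derivative (iter_partial vs F) (at z) v)"

definition rapidly_decaying :: "('a::euclidean_space \<Rightarrow> complex) \<Rightarrow> bool" where
  "rapidly_decaying F \<longleftrightarrow>
     (\<forall>a. \<exists>C. \<forall>z. norm (complex_of_real (monomial a z) * F z) \<le> C)"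

definition schwartz :: "('a::euclidean_space \<Rightarrow> complex) \<Rightarrow> bool" where
  "schwartz F \<longleftrightarrow>
     (\<forall>vs. set vs \<subseteq> Basis \<longrightarrow> (\<forall>z. iter_partial vs F differentiable (at z))) \<and>
     (\<forall>a vs. set vs \<subseteq> Basis \<longrightarrow>
        (\<exists>C. \<forall>z. norm (complex_of_real (monomial a z) * iter_partial vs F z) \<le> C))"

text \<open>Square-integrable (Borel measurable) functions R^n \<rightarrow> C; elements of L^2 are
  represented by such functions, identified up to a.e. equality.\<close>
definition sq_int :: "(real^'n \<Rightarrow> complex) \<Rightarrow> bool" where
  "sq_int f \<longleftrightarrow> f \<in> borel_measurable lborel \<and> integrable lborel (\<lambda>x. (norm (f x))\<^sup>2)"

definition l2_inner :: "(real^'n \<Rightarrow> complex) \<Rightarrow> (real^'n \<Rightarrow> complex) \<Rightarrow> complex" where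
  "l2_inner f g = (LINT x|lborel. cnj (f x) * g x)"

definition l2_norm :: "(real^'n \<Rightarrow> complex) \<Rightarrow> real" where
  "l2_norm f = sqrt (LINT x|lborel. (norm (f x))\<^sup>2)"

definition l2_bounded_operator :: "((real^'n \<Rightarrow> complex) \<Rightarrow> (real^'n \<Rightarrow> complex)) \<Rightarrow> bool" where
  "l2_bounded_operator T \<longleftrightarrow>
     (\<forall>f. sq_int f \<longrightarrow> sq_int (T f)) \<and>
     (\<forall>f g. sq_int f \<longrightarrow> sq_int g \<longrightarrow>
         (AE x in lborel. T (\<lambda>y. f y + g y) x = T f x + T g x)) \<and>
     (\<forall>c f. sq_int f \<longrightarrow> (AE x in lborel. T (\<lambda>y. c * f y) x = c * T f x)) \<and>
     (\<exists>C. \<forall>f. sq_int f \<longrightarrow> l2_norm (T f) \<le> C * l2_norm f)"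

definition l2_positive :: "((real^'n \<Rightarrow> complex) \<Rightarrow> (real^'n \<Rightarrow> complex)) \<Rightarrow> bool" where
  "l2_positive T \<longleftrightarrow>
     (\<forall>f. sq_int f \<longrightarrow> Im (l2_inner f (T f)) = 0 \<and> Re (l2_inner f (T f)) \<ge> 0)"

text \<open>Orthonormal basis of L^2(R^n) (countable, since L^2(R^n) is separable and infinite-dimensional).\<close>
definition l2_onb :: "(nat \<Rightarrow> (real^'n \<Rightarrow> complex)) \<Rightarrow> bool" where
  "l2_onb e \<longleftrightarrow>
     (\<forall>k. sq_int (e k)) \<and>
     (\<forall>i j. l2_inner (e i) (e j) = (if i = j then 1 else 0)) \<and>
     (\<forall>f. sq_int f \<longrightarrow> (\<forall>k. l2_inner (e k) f = 0) \<longrightarrow> (AE x in lborel. f x = 0))"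

definition l2_positive_trace_class :: "((real^'n \<Rightarrow> complex) \<Rightarrow> (real^'n \<Rightarrow> complex)) \<Rightarrow> bool" where
  "l2_positive_trace_class T \<longleftrightarrow>
     l2_bounded_operator T \<and> l2_positive T \<and>
     (\<exists>e. l2_onb e \<and> summable (\<lambda>k. Re (l2_inner (e k) (T (e k)))))"

definition quantum_state :: "((real^'n \<Rightarrow> complex) \<Rightarrow> (real^'n \<Rightarrow> complex)) \<Rightarrow> bool" where
  "quantum_state \<rho> \<longleftrightarrow> l2_positive_trace_class \<rho>"

definition displace :: "(real^'n) \<times> (real^'n) \<Rightarrow> (real^'n \<Rightarrow> complex) \<Rightarrow> real^'n \<Rightarrow> complex" where
  "displace \<xi> \<phi> y =
     exp (\<i> * complex_of_real ((y - (1/2) *\<^sub>R fst \<xi>) \<bullet> snd \<xi>)) * \<phi> (y - fst \<xi>)"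

text \<open>M_\<rho>(\<alpha>,\<beta>) = <\<chi>_\<alpha> | \<rho> | \<chi>_\<beta>>, a function on R^{4n} = (R^n \<times> R^n) \<times> (R^n \<times> R^n).\<close>
definition matrix_elem ::
  "((real^'n \<Rightarrow> complex) \<Rightarrow> (real^'n \<Rightarrow> complex)) \<Rightarrow> (real^'n \<Rightarrow> complex)
    \<Rightarrow> ((real^'n) \<times> (real^'n)) \<times> ((real^'n) \<times> (real^'n)) \<Rightarrow> complex" where
  "matrix_elem \<rho> chi = (\<lambda>(\<alpha>, \<beta>). l2_inner (displace \<alpha> chi) (\<rho> (displace \<beta> chi)))"

end

theory Submission
  imports Defs "HOL-Probability.Sinc_Integral" "HOL-Probability.Characteristic_Functions"
begin

lemma integrable_inv_sq: "integrable lborel (\<lambda>x::real. inverse (1 + x^2))"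
proof -
  have "einterval (-\<infinity>) \<infinity> = UNIV" by (auto simp: einterval_def)
  with integrable_inverse_1_plus_square show ?thesis
    by (simp add: set_integrable_def)
qed

lemma integrable_prod_weight:
  "integrable lborel (\<lambda>y::'a::euclidean_space. \<Prod>b\<in>Basis. inverse (1 + (y \<bullet> b)^2))"
proof -
  have ps: "product_sigma_finite (\<lambda>_::'a. lborel::real measure)"
    by (simp add: product_sigma_finite_def lborel.sigma_finite_measure_axioms)
  have 1: "integrable (\<Pi>\<^sub>M b\<in>(Basis::'a set). lborel) (\<lambda>x. \<Prod>b\<in>Basis. inverse (1 + (x b::real)^2))"
    using product_sigma_finite.product_integrable_prod[OF ps, where f="\<lambda>_ x. inverse (1 + x^2)" and I="Basis::'a set"] integrable_inv_sq by simp
  have eq: "\<And>x b. b \<in> Basis \<Longrightarrow> ((\<Sum>c\<in>Basis. x c *\<^sub>R c)::'a) \<bullet> b = x b"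
    by (simp add: inner_sum_left inner_Basis if_distrib cong: if_cong)
  have "integrable (\<Pi>\<^sub>M b\<in>Basis. lborel) (\<lambda>x. \<Prod>b\<in>Basis. inverse (1 + (((\<Sum>c\<in>Basis. x c *\<^sub>R c)::'a) \<bullet> b)^2))"
    using 1 by (simp add: eq)
  then show ?thesis
    by (subst lborel_eq) (subst integrable_distr_eq; simp)
qed

definition wt :: "nat \<Rightarrow> 'a::real_normed_vector \<Rightarrow> real" where
  "wt N y = inverse ((1 + norm y)^N)"

lemma wt_pos: "0 < wt N y"
  by (simp add: wt_def add_pos_nonneg)

lemma wt_nonneg: "0 \<le> wt N y"
  using wt_pos[of N y] by simp

lemma wt_le1: "wt N y \<le> 1"
  unfolding wt_def using le_imp_inverse_le[of 1 "(1+norm y)^N"] by (simp add: one_le_power)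

lemma wt_mult: "(1 + norm y)^k * wt (N + k) y = wt N y"
proof -
  have p: "(1 + norm y) > 0" by (simp add: add_pos_nonneg)
  show ?thesis unfolding wt_def using p by (simp add: power_add field_simps)
qed

lemma wt_mult': "(1 + norm y)^k * wt (k + N) y = wt N y"
  using wt_mult[of y k N] by (simp add: add.commute)

lemma wt_mono: "N \<le> M \<Longrightarrow> wt M y \<le> wt N y"
  unfolding wt_def
  by (rule le_imp_inverse_le) (auto intro!: power_increasing simp: add_pos_nonneg)

lemma wt_shift: "wt N (y - s) \<le> (1 + norm s)^N * wt N y"
proof -
  have p1: "(1 + norm y) > 0" "(1 + norm (y - s)) > 0" "1 + norm s > 0" by (auto simp: add_pos_nonneg)
  have "norm y \<le> norm (y - s) + norm s" by (metis norm_triangle_sub add.commute)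
  then have "1 + norm y \<le> (1 + norm (y - s)) * (1 + norm s)"
    by (simp add: algebra_simps) (smt (verit) mult_nonneg_nonneg norm_ge_zero)
  then have "(1 + norm y)^N \<le> ((1 + norm (y - s)) * (1 + norm s))^N"
    using p1 by (intro power_mono) auto
  then have "(1 + norm y)^N \<le> (1 + norm (y - s))^N * (1 + norm s)^N"
    by (simp add: power_mult_distrib)
  then show ?thesis using p1 unfolding wt_def
    by (simp add: field_simps)
qed

lemma wt_shift1: "norm s \<le> 1 \<Longrightarrow> wt N (y - s) \<le> 2^N * wt N y"
proof -
  assume "norm s \<le> 1"
  then have "(1 + norm s)^N \<le> 2^N" by (intro power_mono) auto
  then show ?thesis using wt_shift[of N y s] wt_nonneg[of N y]
    by (meson mult_right_mono order_trans)
qed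

lemma wt_shift1': "norm s \<le> 1 \<Longrightarrow> wt N (y + s) \<le> 2^N * wt N y"
  using wt_shift1[of "-s" N y] by simp

definition RD :: "('a::real_normed_vector \<Rightarrow> 'b::real_normed_vector) \<Rightarrow> bool" where
  "RD F \<longleftrightarrow> (\<forall>N. \<exists>C. \<forall>z. norm (F z) \<le> C * wt N z)"

definition PB :: "('a::real_normed_vector \<Rightarrow> 'b::real_normed_vector) \<Rightarrow> bool" where
  "PB F \<longleftrightarrow> (\<exists>C N. \<forall>z. norm (F z) \<le> C * (1 + norm z)^N)"

lemma monomial_bound: "\<bar>monomial a (z::'a::euclidean_space)\<bar> \<le> (1 + norm z) ^ (\<Sum>b\<in>Basis. a b)"
proof -
  have "\<bar>monomial a z\<bar> = (\<Prod>b\<in>Basis. \<bar>z \<bullet> b\<bar> ^ a b)"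
    by (simp add: monomial_def abs_prod power_abs)
  also have "\<dots> \<le> (\<Prod>b\<in>Basis. (1 + norm z) ^ a b)"
    by (intro prod_mono conjI power_mono) (auto simp: Basis_le_norm add_increasing)
  also have "\<dots> = (1 + norm z) ^ (\<Sum>b\<in>Basis. a b)"
    by (simp add: power_sum)
  finally show ?thesis .
qed

lemma monomial_delta: "b \<in> Basis \<Longrightarrow> monomial (\<lambda>c. if c = b then N else 0) z = (z \<bullet> b) ^ N"
proof -
  assume b: "b \<in> Basis"
  have "monomial (\<lambda>c. if c = b then N else 0) z = (\<Prod>c\<in>Basis. if c = b then (z \<bullet> c)^N else 1)"
    unfolding monomial_def by (intro prod.cong) auto
  also have "\<dots> = (z \<bullet> b)^N" using b by (simp add: prod.delta)
  finally show ?thesis .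
qed

lemma monomial_zero: "monomial (\<lambda>_. 0) z = 1"
  by (simp add: monomial_def)

lemma one_plus_pow_le: "(x::real) \<ge> 0 \<Longrightarrow> (1 + x)^N \<le> 2^N * (1 + x^N)"
proof -
  assume x: "x \<ge> 0"
  show ?thesis
  proof (cases "x \<le> 1")
    case True
    then have "(1 + x)^N \<le> 2^N" using x by (intro power_mono) auto
    moreover have "(2::real)^N \<le> 2^N * (1 + x^N)" using x by simp
    ultimately show ?thesis by linarith
  next
    case False
    then have "(1 + x)^N \<le> (2 * x)^N" using x by (intro power_mono) auto
    moreover have "(2 * x)^N \<le> 2^N * (1 + x^N)" using x by (simp add: power_mult_distrib)
    ultimately show ?thesis by linarith
  qed
qed

lemma norm_pow_le_sum: "norm (z::'a::euclidean_space) ^ N \<le> real DIM('a) ^ N * (\<Sum>b\<in>Basis. \<bar>z \<bullet> b\<bar> ^ N)"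
proof -
  define m where "m = Max ((\<lambda>b. \<bar>z \<bullet> b\<bar>) ` Basis)"
  have "m \<in> (\<lambda>b. \<bar>z \<bullet> b\<bar>) ` Basis" unfolding m_def by (intro Max_in) auto
  then obtain b0 where b0: "b0 \<in> Basis" "m = \<bar>z \<bullet> b0\<bar>" by auto
  have le: "\<bar>z \<bullet> b\<bar> \<le> m" if "b \<in> Basis" for b unfolding m_def using that by (intro Max_ge) auto
  have "norm z \<le> (\<Sum>b\<in>Basis. \<bar>z \<bullet> b\<bar>)" by (rule norm_le_l1)
  also have "\<dots> \<le> (\<Sum>b\<in>(Basis::'a set). m)" by (intro sum_mono le)
  also have "\<dots> = real DIM('a) * m" by simp
  finally have "norm z ^ N \<le> (real DIM('a) * m) ^ N" by (intro power_mono) auto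
  also have "\<dots> = real DIM('a) ^ N * \<bar>z \<bullet> b0\<bar> ^ N" by (simp add: power_mult_distrib b0)
  also have "\<dots> \<le> real DIM('a) ^ N * (\<Sum>b\<in>Basis. \<bar>z \<bullet> b\<bar> ^ N)"
    by (intro mult_left_mono member_le_sum) (auto simp: b0)
  finally show ?thesis .
qed

lemma finite_choice_bound:
  assumes "finite I" "\<And>i. i \<in> I \<Longrightarrow> \<exists>C. \<forall>z. f i z \<le> (C::real)"
  shows "\<exists>C. \<forall>z. (\<Sum>i\<in>I. f i z) \<le> C"
proof -
  from assms(2) obtain C where C: "\<And>i z. i \<in> I \<Longrightarrow> f i z \<le> C i" by metis
  show ?thesis by (rule exI[of _ "\<Sum>i\<in>I. C i"]) (auto intro!: sum_mono C)
qed

lemma rd_from_monomial: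
  fixes F :: "'a::euclidean_space \<Rightarrow> complex"
  assumes "\<forall>a. \<exists>C. \<forall>z. norm (complex_of_real (monomial a z) * F z) \<le> C"
  shows "RD F"
  unfolding RD_def
proof
  fix N
  obtain C0 where C0: "\<And>z. norm (F z) \<le> C0"
    using assms[rule_format, of "\<lambda>_. 0"] by (auto simp: monomial_zero)
  have "\<exists>C. \<forall>z. (\<Sum>b\<in>Basis. \<bar>z \<bullet> b\<bar> ^ N * norm (F z)) \<le> C"
  proof (rule finite_choice_bound)
    fix b :: 'a assume b: "b \<in> Basis"
    obtain C where "\<And>z. norm (complex_of_real (monomial (\<lambda>c. if c = b then N else 0) z) * F z) \<le> C"
      using assms by metis
    then show "\<exists>C. \<forall>z. \<bar>z \<bullet> b\<bar> ^ N * norm (F z) \<le> C"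
      using b by (auto simp: monomial_delta norm_mult power_abs norm_power)
  qed auto
  then obtain C1 where C1: "\<And>z. (\<Sum>b\<in>Basis. \<bar>z \<bullet> b\<bar> ^ N * norm (F z)) \<le> C1" by blast
  show "\<exists>C. \<forall>z. norm (F z) \<le> C * wt N z"
  proof (intro exI allI)
    fix z :: 'a
    have p: "(1 + norm z)^N > 0" by (simp add: add_pos_nonneg)
    have "(1 + norm z)^N * norm (F z) \<le> 2^N * (1 + norm z ^ N) * norm (F z)"
      by (intro mult_right_mono one_plus_pow_le) auto
    also have "\<dots> = 2^N * (norm (F z) + norm z ^ N * norm (F z))" by (simp add: algebra_simps)
    also have "\<dots> \<le> 2^N * (C0 + real DIM('a) ^ N * C1)"
    proof -
      have "norm z ^ N * norm (F z) \<le> real DIM('a) ^ N * (\<Sum>b\<in>Basis. \<bar>z \<bullet> b\<bar> ^ N) * norm (F z)"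
        by (intro mult_right_mono norm_pow_le_sum) auto
      also have "\<dots> = real DIM('a) ^ N * (\<Sum>b\<in>Basis. \<bar>z \<bullet> b\<bar> ^ N * norm (F z))"
        by (simp add: sum_distrib_right mult.assoc)
      also have "\<dots> \<le> real DIM('a) ^ N * C1" by (intro mult_left_mono C1) auto
      finally show ?thesis using C0[of z] by (intro mult_left_mono) auto
    qed
    finally have "(1 + norm z)^N * norm (F z) \<le> 2^N * (C0 + real DIM('a) ^ N * C1)" .
    then have "norm (F z) \<le> (2^N * (C0 + real DIM('a) ^ N * C1)) / (1 + norm z)^N"
      using p by (simp add: pos_le_divide_eq mult.commute)
    then show "norm (F z) \<le> (2^N * (C0 + real DIM('a) ^ N * C1)) * wt N z"
      unfolding wt_def by (simp add: divide_inverse)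
  qed
qed

lemma monomial_from_rd:
  fixes F :: "'a::euclidean_space \<Rightarrow> complex"
  assumes "RD F"
  shows "\<exists>C. \<forall>z. norm (complex_of_real (monomial a z) * F z) \<le> C"
proof -
  let ?N = "\<Sum>b\<in>Basis. a b"
  obtain C where C: "\<And>z. norm (F z) \<le> C * wt ?N z" using assms unfolding RD_def by blast
  show ?thesis
  proof (intro exI allI)
    fix z
    have "norm (complex_of_real (monomial a z) * F z) = \<bar>monomial a z\<bar> * norm (F z)"
      by (simp add: norm_mult)
    also have "\<dots> \<le> (1 + norm z) ^ ?N * (C * wt ?N z)"
      by (intro mult_mono monomial_bound C) auto
    also have "\<dots> = C" using wt_mult[of z ?N 0] by (simp add: algebra_simps wt_def)
    finally show "norm (complex_of_real (monomial a z) * F z) \<le> C" .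
  qed
qed

lemma schwartz_iff:
  "schwartz F \<longleftrightarrow>
     (\<forall>vs. set vs \<subseteq> Basis \<longrightarrow> (\<forall>z. iter_partial vs F differentiable (at z))) \<and>
     (\<forall>vs. set vs \<subseteq> Basis \<longrightarrow> RD (iter_partial vs F))"
  unfolding schwartz_def using rd_from_monomial monomial_from_rd by metis


lemma mvt_cplx:
  fixes g :: "real \<Rightarrow> 'b::real_normed_vector"
  assumes h: "0 \<le> h"
    and d: "\<And>t. t \<in> {0..h} \<Longrightarrow> (g has_vector_derivative g' t) (at t)"
    and B: "\<And>t. t \<in> {0..h} \<Longrightarrow> norm (g' t) \<le> B"
    and t: "t \<in> {0..h}"
  shows "norm (g t - g 0) \<le> B * t"
proof -
  have "norm (g t - g 0) \<le> B * norm (t - 0)"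
  proof (rule differentiable_bound[of "{0..h}" g "\<lambda>t s. s *\<^sub>R g' t"])
    show "convex {0..h}" by simp
    show "(g has_derivative (\<lambda>s. s *\<^sub>R g' x)) (at x within {0..h})" if "x \<in> {0..h}" for x
      using d[OF that] by (simp add: has_vector_derivative_def has_derivative_at_withinI)
    show "onorm (\<lambda>s. s *\<^sub>R g' x) \<le> B" if "x \<in> {0..h}" for x
      using B[OF that] by (simp add: onorm_scaleR_left onorm_id)
  qed (use t h in auto)
  then show ?thesis using t by simp
qed

lemma taylor2_cplx:
  fixes g :: "real \<Rightarrow> 'b::real_normed_vector"
  assumes h: "0 \<le> h"
    and d: "\<And>t. t \<in> {0..h} \<Longrightarrow> (g has_vector_derivative g' t) (at t)"
    and B: "\<And>t. t \<in> {0..h} \<Longrightarrow> norm (g' t - g' 0) \<le> B"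
  shows "norm (g h - g 0 - h *\<^sub>R g' 0) \<le> h * B"
proof -
  have "norm (g h - g 0 - (h - 0) *\<^sub>R g' 0) \<le> norm (h - 0) * B"
    by (rule vector_differentiable_bound_linearization[of "{0..h}" g g'])
       (use d B h in \<open>auto simp: has_vector_derivative_at_within closed_segment_eq_real_ivl\<close>)
  then show ?thesis using h by simp
qed

lemma interp:
  fixes G :: "'a::real_normed_vector \<Rightarrow> complex" and v :: 'a and G' G'' :: "'a \<Rightarrow> 'a \<Rightarrow> complex"
  assumes v: "norm v = 1"
    and dG: "\<And>z. (G has_derivative G' z) (at z)"
    and dG1: "\<And>z. ((\<lambda>z. G' z v) has_derivative G'' z) (at z)"
    and rd: "RD G" and pb: "PB (\<lambda>z. G'' z v)"
  shows "RD (\<lambda>z. G' z v)"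
  unfolding RD_def
proof
  fix P
  obtain C2 N2 where C2: "\<And>z. norm (G'' z v) \<le> C2 * (1 + norm z)^N2"
    using pb unfolding PB_def by blast
  have "norm (G'' 0 v) \<le> C2" using C2[of 0] by simp
  then have C2nn: "C2 \<ge> 0" by (meson norm_ge_zero order_trans)
  define m where "m = N2 + P"
  define K where "K = m + P"
  obtain CK where CK: "\<And>z. norm (G z) \<le> CK * wt K z" using rd unfolding RD_def by blast
  have "norm (G 0) \<le> CK" using CK[of 0] by (simp add: wt_def)
  then have CKnn: "CK \<ge> 0" by (meson norm_ge_zero order_trans)
  show "\<exists>C. \<forall>z. norm (G' z v) \<le> C * wt P z"
  proof (intro exI allI)
    fix z :: 'a
    define h where "h = wt m z"
    have h0: "0 < h" "h \<le> 1" unfolding h_def by (auto simp: wt_pos wt_le1)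
    define S where "S = C2 * 2^N2 * (1 + norm z)^N2"
    define a where "a t = G (z + t *\<^sub>R v)" for t
    define a' where "a' t = G' (z + t *\<^sub>R v) v" for t
    define a'' where "a'' t = G'' (z + t *\<^sub>R v) v" for t
    have da: "(a has_vector_derivative a' t) (at t)" for t
    proof -
      have "(G has_derivative G' (z + t *\<^sub>R v)) (at (z + t *\<^sub>R v))" by (rule dG)
      then have "((G \<circ> (\<lambda>s. z + s *\<^sub>R v)) has_derivative (G' (z + t *\<^sub>R v) \<circ> (\<lambda>s. s *\<^sub>R v))) (at t)"
        by (intro diff_chain_at) (auto intro!: derivative_eq_intros)
      moreover have "linear (G' (z + t *\<^sub>R v))" using dG has_derivative_linear by blast
      ultimately show ?thesis unfolding a_def a'_def has_vector_derivative_def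
        by (simp add: o_def linear_scale linear.scaleR)
    qed
    have da': "(a' has_vector_derivative a'' t) (at t)" for t
    proof -
      have "((\<lambda>z. G' z v) has_derivative G'' (z + t *\<^sub>R v)) (at (z + t *\<^sub>R v))" by (rule dG1)
      then have "(((\<lambda>z. G' z v) \<circ> (\<lambda>s. z + s *\<^sub>R v)) has_derivative (G'' (z + t *\<^sub>R v) \<circ> (\<lambda>s. s *\<^sub>R v))) (at t)"
        by (intro diff_chain_at) (auto intro!: derivative_eq_intros)
      moreover have "linear (G'' (z + t *\<^sub>R v))" using dG1 has_derivative_linear by blast
      ultimately show ?thesis unfolding a'_def a''_def has_vector_derivative_def
        by (simp add: o_def linear.scaleR)
    qed
    have a''b: "norm (a'' t) \<le> S" if "t \<in> {0..h}" for t
    proof -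
      have "norm (z + t *\<^sub>R v) \<le> norm z + norm (t *\<^sub>R v)" by (rule norm_triangle_ineq)
      moreover have "norm (t *\<^sub>R v) = \<bar>t\<bar>" using v by simp
      moreover have "\<bar>t\<bar> \<le> 1" using that h0 by auto
      ultimately have "norm (z + t *\<^sub>R v) \<le> norm z + 1" by linarith
      then have "1 + norm (z + t *\<^sub>R v) \<le> 2 * (1 + norm z)" using norm_ge_zero[of z] unfolding distrib_left by linarith
      then have "(1 + norm (z + t *\<^sub>R v))^N2 \<le> (2 * (1 + norm z))^N2" by (intro power_mono) auto
      then have "C2 * (1 + norm (z + t *\<^sub>R v))^N2 \<le> C2 * (2 * (1 + norm z))^N2"
        using C2nn by (intro mult_left_mono)
      with C2[of "z + t *\<^sub>R v"] have "norm (G'' (z + t *\<^sub>R v) v) \<le> C2 * (2 * (1 + norm z))^N2"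
        by (rule order_trans)
      then show ?thesis unfolding a''_def S_def
        by (simp only: power_mult_distrib mult.assoc)
    qed
    have a'b: "norm (a' t - a' 0) \<le> h * S" if "t \<in> {0..h}" for t
    proof -
      have "norm (a' t - a' 0) \<le> S * t"
        by (rule mvt_cplx[of h a' a'']) (use h0 da' a''b that in auto)
      moreover have "S \<ge> 0" unfolding S_def using C2nn by simp
      moreover have "t \<le> h" using that by simp
      ultimately have "S * t \<le> S * h" by (intro mult_left_mono)
      then show ?thesis using \<open>norm (a' t - a' 0) \<le> S * t\<close> by (simp add: mult.commute)
    qed
    have tay: "norm (a h - a 0 - h *\<^sub>R a' 0) \<le> h * (h * S)"
      by (rule taylor2_cplx) (use h0 da a'b in auto)
    have "h * norm (G' z v) = norm (h *\<^sub>R a' 0)" using h0 unfolding a'_def by simp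
    also have "\<dots> \<le> norm (a h) + norm (a 0) + norm (a h - a 0 - h *\<^sub>R a' 0)"
    proof -
      have "h *\<^sub>R a' 0 = (a h - a 0) - (a h - a 0 - h *\<^sub>R a' 0)" by simp
      then have "norm (h *\<^sub>R a' 0) \<le> norm (a h - a 0) + norm (a h - a 0 - h *\<^sub>R a' 0)"
        by (metis norm_triangle_ineq4)
      moreover have "norm (a h - a 0) \<le> norm (a h) + norm (a 0)" by (rule norm_triangle_ineq4)
      ultimately show ?thesis by linarith
    qed
    also have "\<dots> \<le> 2^K * CK * wt K z + CK * wt K z + h * (h * S)"
    proof -
      have "norm (a h) \<le> CK * wt K (z + h *\<^sub>R v)" unfolding a_def by (rule CK)
      also have "\<dots> \<le> CK * (2^K * wt K z)"
        using wt_shift1'[of "h *\<^sub>R v" K z] h0 v CKnn by (intro mult_left_mono) auto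
      moreover have "CK * (2^K * wt K z) = 2^K * CK * wt K z" by (simp add: mult_ac)
      moreover have "norm (a 0) \<le> CK * wt K z" using CK[of z] unfolding a_def by simp
      ultimately show ?thesis using tay by linarith
    qed
    finally have main: "h * norm (G' z v) \<le> (2^K + 1) * CK * wt K z + h * (h * S)"
      by (simp add: algebra_simps)
    have e1: "wt K z = h * wt P z"
      unfolding h_def K_def wt_def by (simp add: power_add)
    have e2: "h * S = C2 * 2^N2 * wt P z"
    proof -
      have "h * S = C2 * 2^N2 * ((1 + norm z)^N2 * wt (N2 + P) z)"
        unfolding h_def S_def m_def by (simp only: mult_ac)
      then show ?thesis by (simp only: wt_mult')
    qed
    have "h * norm (G' z v) \<le> h * (((2^K + 1) * CK + C2 * 2^N2) * wt P z)"
    proof -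
      have r: "(2^K + 1) * CK * wt K z + h * (h * S) = h * (((2^K + 1) * CK + C2 * 2^N2) * wt P z)"
        unfolding e1 e2 by (simp add: algebra_simps)
      show ?thesis using main unfolding r .
    qed
    then show "norm (G' z v) \<le> ((2^K + 1) * CK + C2 * 2^N2) * wt P z"
      using h0 by simp
  qed
qed


lemma iter_partial_append: "iter_partial (vs @ ws) F = iter_partial vs (iter_partial ws F)"
  by (induction vs) auto

definition smooth :: "('a::euclidean_space \<Rightarrow> complex) \<Rightarrow> bool" where
  "smooth F \<longleftrightarrow> (\<forall>vs. set vs \<subseteq> Basis \<longrightarrow> (\<forall>z. iter_partial vs F differentiable (at z)))"

lemma schwartz_iff2: "schwartz F \<longleftrightarrow> smooth F \<and> (\<forall>vs. set vs \<subseteq> Basis \<longrightarrow> RD (iter_partial vs F))"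
  unfolding smooth_def schwartz_iff ..

lemma schwartz_smooth: "schwartz F \<Longrightarrow> smooth F"
  by (simp add: schwartz_iff2)

lemma schwartz_RD: "schwartz F \<Longrightarrow> set vs \<subseteq> Basis \<Longrightarrow> RD (iter_partial vs F)"
  by (simp add: schwartz_iff2)

lemma schwartz_diff: "schwartz F \<Longrightarrow> set vs \<subseteq> Basis \<Longrightarrow> iter_partial vs F differentiable (at z)"
  by (simp add: schwartz_iff2 smooth_def)

lemma schwartz_partial:
  assumes "schwartz F" "e \<in> Basis"
  shows "schwartz (iter_partial [e] F)"
proof -
  have eq: "\<And>vs. iter_partial vs (iter_partial [e] F) = iter_partial (vs @ [e]) F"
    by (simp only: iter_partial_append)
  have s: "set vs \<subseteq> Basis \<Longrightarrow> set (vs @ [e]) \<subseteq> Basis" for vs using assms(2) by auto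
  show ?thesis using assms(1) s unfolding schwartz_iff2 smooth_def eq by blast
qed

lemma RD_add: "RD f \<Longrightarrow> RD g \<Longrightarrow> RD (\<lambda>y. f y + g y)"
  unfolding RD_def
proof
  fix N assume f: "\<forall>N. \<exists>C. \<forall>z. norm (f z) \<le> C * wt N z" and g: "\<forall>N. \<exists>C. \<forall>z. norm (g z) \<le> C * wt N z"
  obtain C1 C2 where "\<And>z. norm (f z) \<le> C1 * wt N z" "\<And>z. norm (g z) \<le> C2 * wt N z" using f g by metis
  then show "\<exists>C. \<forall>z. norm (f z + g z) \<le> C * wt N z"
    by (intro exI[of _ "C1 + C2"] allI) (smt (verit) norm_triangle_ineq distrib_right)
qed

lemma RD_cmult:
  fixes f :: "'a::real_normed_vector \<Rightarrow> 'b::real_normed_div_algebra"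
  shows "RD f \<Longrightarrow> RD (\<lambda>y. c * f y)"
  unfolding RD_def
proof
  fix N assume f: "\<forall>N. \<exists>C. \<forall>z. norm (f z) \<le> C * wt N z"
  obtain C1 where C1: "\<And>z. norm (f z) \<le> C1 * wt N z" using f by metis
  show "\<exists>C. \<forall>z. norm (c * f z) \<le> C * wt N z"
  proof (intro exI[of _ "norm c * C1"] allI)
    fix z
    have "norm (c * f z) = norm c * norm (f z)" by (simp add: norm_mult)
    also have "\<dots> \<le> norm c * (C1 * wt N z)" by (intro mult_left_mono C1) auto
    finally show "norm (c * f z) \<le> norm c * C1 * wt N z" by (simp add: mult.assoc)
  qed
qed

lemma RD_zero: "RD (\<lambda>y. 0)"
  unfolding RD_def by (auto intro: exI[of _ 0])

lemma RD_sum: "finite I \<Longrightarrow> (\<And>i. i \<in> I \<Longrightarrow> RD (f i)) \<Longrightarrow> RD (\<lambda>y. \<Sum>i\<in>I. f i y)"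
  by (induction I rule: finite_induct) (auto intro: RD_add RD_zero)

lemma RD_coord: "norm e \<le> 1 \<Longrightarrow> RD f \<Longrightarrow> RD (\<lambda>y. complex_of_real (y \<bullet> e) * f y)"
  unfolding RD_def
proof
  fix N assume e: "norm e \<le> 1" and f: "\<forall>N. \<exists>C. \<forall>z. norm (f z) \<le> C * wt N z"
  obtain C1 where C1: "\<And>z. norm (f z) \<le> C1 * wt (N + 1) z" using f by metis
  show "\<exists>C. \<forall>z. norm (complex_of_real (z \<bullet> e) * f z) \<le> C * wt N z"
  proof (intro exI[of _ C1] allI)
    fix z
    have ze: "\<bar>z \<bullet> e\<bar> \<le> 1 + norm z"
    proof -
      have "\<bar>z \<bullet> e\<bar> \<le> norm z * norm e" by (rule Cauchy_Schwarz_ineq2)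
      also have "\<dots> \<le> norm z" using e by (simp add: mult_left_le)
      finally show ?thesis by simp
    qed
    have "norm (complex_of_real (z \<bullet> e) * f z) = \<bar>z \<bullet> e\<bar> * norm (f z)" by (simp add: norm_mult)
    also have "\<dots> \<le> (1 + norm z) * (C1 * wt (N + 1) z)"
      by (intro mult_mono ze C1) auto
    also have "\<dots> = C1 * ((1 + norm z)^1 * wt (N + 1) z)" by simp
    also have "\<dots> = C1 * wt N z" by (simp only: wt_mult)
    finally show "norm (complex_of_real (z \<bullet> e) * f z) \<le> C1 * wt N z" .
  qed
qed

definition Xw :: "'a::euclidean_space \<Rightarrow> ('a \<Rightarrow> complex) \<Rightarrow> 'a \<Rightarrow> complex" where
  "Xw e F = (\<lambda>y. complex_of_real (y \<bullet> e) * F y)"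

definition rem_at :: "nat \<Rightarrow> 'b list \<Rightarrow> 'b list" where
  "rem_at i vs = take i vs @ drop (Suc i) vs"

lemma set_rem_at: "set (rem_at i vs) \<subseteq> set vs"
  unfolding rem_at_def by (auto dest: in_set_takeD in_set_dropD)

lemma rem_at_Cons: "rem_at (Suc i) (v # vs) = v # rem_at i vs"
  by (simp add: rem_at_def)

lemma rem_at_0: "rem_at 0 (v # vs) = vs"
  by (simp add: rem_at_def)

lemma coord_has_derivative:
  "((\<lambda>y. complex_of_real (y \<bullet> e)) has_derivative (\<lambda>h. complex_of_real (h \<bullet> e))) (at z)"
  by (intro has_derivative_of_real has_derivative_inner_left has_derivative_ident)

lemma leibniz:
  assumes sm: "smooth F" and vs: "set vs \<subseteq> Basis"
  shows "iter_partial vs (Xw e F) =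
    (\<lambda>y. complex_of_real (y \<bullet> e) * iter_partial vs F y +
         (\<Sum>i<length vs. complex_of_real (vs ! i \<bullet> e) * iter_partial (rem_at i vs) F y))"
  using vs
proof (induction vs)
  case Nil
  then show ?case by (simp add: Xw_def)
next
  case (Cons v vs)
  then have IH: "iter_partial vs (Xw e F) =
    (\<lambda>y. complex_of_real (y \<bullet> e) * iter_partial vs F y +
         (\<Sum>i<length vs. complex_of_real (vs ! i \<bullet> e) * iter_partial (rem_at i vs) F y))"
    and vvs: "v \<in> Basis" "set vs \<subseteq> Basis" by auto
  have dF: "\<And>ws z. set ws \<subseteq> Basis \<Longrightarrow> (iter_partial ws F has_derivative frechet_derivative (iter_partial ws F) (at z)) (at z)"
    using sm unfolding smooth_def using frechet_derivative_works by blast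
  have rem_sub: "set (rem_at i vs) \<subseteq> Basis" for i using set_rem_at[of i vs] vvs by blast
  show ?case
  proof
    fix z
    have "((\<lambda>y. complex_of_real (y \<bullet> e) * iter_partial vs F y +
         (\<Sum>i<length vs. complex_of_real (vs ! i \<bullet> e) * iter_partial (rem_at i vs) F y))
       has_derivative (\<lambda>h. (complex_of_real (z \<bullet> e) * frechet_derivative (iter_partial vs F) (at z) h +
            complex_of_real (h \<bullet> e) * iter_partial vs F z) +
         (\<Sum>i<length vs. complex_of_real (vs ! i \<bullet> e) * frechet_derivative (iter_partial (rem_at i vs) F) (at z) h))) (at z)"
      by (intro has_derivative_add has_derivative_mult coord_has_derivative dF vvs has_derivative_sum
          has_derivative_mult_right rem_sub)
    then have "frechet_derivative (iter_partial vs (Xw e F)) (at z) v =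
       (complex_of_real (z \<bullet> e) * frechet_derivative (iter_partial vs F) (at z) v +
            complex_of_real (v \<bullet> e) * iter_partial vs F z) +
         (\<Sum>i<length vs. complex_of_real (vs ! i \<bullet> e) * frechet_derivative (iter_partial (rem_at i vs) F) (at z) v)"
      unfolding IH by (simp add: frechet_derivative_at[symmetric])
    also have "\<dots> = complex_of_real (z \<bullet> e) * iter_partial (v # vs) F z +
         (\<Sum>i<length (v # vs). complex_of_real ((v # vs) ! i \<bullet> e) * iter_partial (rem_at i (v # vs)) F z)"
      by (simp add: sum.lessThan_Suc_shift rem_at_Cons rem_at_0 del: sum.lessThan_Suc)
    finally show "iter_partial (v # vs) (Xw e F) z = complex_of_real (z \<bullet> e) * iter_partial (v # vs) F z +
         (\<Sum>i<length (v # vs). complex_of_real ((v # vs) ! i \<bullet> e) * iter_partial (rem_at i (v # vs)) F z)"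
      by simp
  qed
qed

lemma differentiable_coord_mult:
  "f differentiable (at z) \<Longrightarrow> (\<lambda>y. complex_of_real (y \<bullet> e) * f y) differentiable (at z)"
proof -
  assume "f differentiable (at z)"
  then obtain D where "(f has_derivative D) (at z)" unfolding differentiable_def by blast
  from has_derivative_mult[OF coord_has_derivative[of e z] this]
  show ?thesis unfolding differentiable_def by blast
qed

lemma schwartz_Xw:
  assumes F: "schwartz F" and e: "e \<in> Basis"
  shows "schwartz (Xw e F)"
  unfolding schwartz_iff2
proof (intro conjI allI impI)
  have sm: "smooth F" using F by (rule schwartz_smooth)
  show "smooth (Xw e F)" unfolding smooth_def
  proof (intro allI impI)
    fix vs z assume vs: "set vs \<subseteq> (Basis::'a set)"
    have rem_sub: "set (rem_at i vs) \<subseteq> Basis" for i using set_rem_at[of i vs] vs by blast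
    show "iter_partial vs (Xw e F) differentiable (at z)"
      unfolding leibniz[OF sm vs]
      by (intro differentiable_compose[of "\<lambda>x. x", OF _ differentiable_ident] differentiable_add differentiable_coord_mult
         differentiable_sum differentiable_mult differentiable_const schwartz_diff[OF F] vs rem_sub ballI) (simp_all add: differentiable_compose)
  qed
  fix vs assume vs: "set vs \<subseteq> (Basis::'a set)"
  have rem_sub: "set (rem_at i vs) \<subseteq> Basis" for i using set_rem_at[of i vs] vs by blast
  have ne: "norm e \<le> 1" using e by simp
  show "RD (iter_partial vs (Xw e F))"
    unfolding leibniz[OF sm vs]
    by (intro RD_add RD_coord ne schwartz_RD[OF F] vs RD_sum RD_cmult rem_sub) auto
qed


lemma cont_meas: "continuous_on UNIV f \<Longrightarrow> f \<in> borel_measurable lborel"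
  by (simp add: borel_measurable_continuous_onI)

lemma wt_continuous: "continuous_on UNIV (wt N :: 'a::real_normed_vector \<Rightarrow> real)"
proof -
  have "\<And>y::'a. 1 + norm y \<noteq> 0" by (metis add_pos_nonneg norm_ge_zero zero_less_one less_irrefl)
  then show ?thesis unfolding wt_def by (intro continuous_intros) auto
qed

lemma cnj_meas[measurable]: "f \<in> borel_measurable M \<Longrightarrow> (\<lambda>x. cnj (f x)) \<in> borel_measurable M"
  by (rule measurable_compose[of f M borel cnj]) (auto intro: borel_measurable_continuous_onI continuous_on_cnj continuous_on_id)

lemma wt_sq_le_prod:
  "(wt DIM('a) (y::'a::euclidean_space))^2 \<le> (\<Prod>b\<in>Basis. inverse (1 + (y \<bullet> b)^2))"
proof -
  have le: "1 + (y \<bullet> b)^2 \<le> (1 + norm y)^2" if "b \<in> Basis" for b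
  proof -
    have "\<bar>y \<bullet> b\<bar> \<le> norm y" using that by (rule Basis_le_norm)
    then have "(y \<bullet> b)^2 \<le> (norm y)^2" by (metis abs_le_square_iff abs_norm_cancel)
    moreover have "(1 + norm y)^2 = 1 + 2 * norm y + (norm y)^2" by (simp add: power2_eq_square algebra_simps)
    ultimately show ?thesis using norm_ge_zero[of y] by linarith
  qed
  have "(\<Prod>b\<in>(Basis::'a set). 1 + (y \<bullet> b)^2) \<le> (\<Prod>b\<in>(Basis::'a set). (1 + norm y)^2)"
    by (intro prod_mono) (auto intro: le add_pos_nonneg)
  also have "\<dots> = (1 + norm y)^(2 * DIM('a))" by (simp add: power_mult[symmetric] mult.commute)
  finally have P: "(\<Prod>b\<in>(Basis::'a set). 1 + (y \<bullet> b)^2) \<le> (1 + norm y)^(2 * DIM('a))" .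
  have Ppos: "0 < (\<Prod>b\<in>(Basis::'a set). 1 + (y \<bullet> b)^2)" by (intro prod_pos) (auto intro: add_pos_nonneg)
  have "(wt DIM('a) y)^2 = inverse ((1 + norm y)^(2 * DIM('a)))"
    unfolding wt_def by (simp add: power_mult mult.commute power_inverse)
  also have "\<dots> \<le> inverse (\<Prod>b\<in>(Basis::'a set). 1 + (y \<bullet> b)^2)"
    using P Ppos by (rule le_imp_inverse_le)
  also have "\<dots> = (\<Prod>b\<in>Basis. inverse (1 + (y \<bullet> b)^2))" by (simp add: prod_inversef[symmetric])
  finally show ?thesis .
qed

lemma integrable_wt2: "integrable lborel (\<lambda>y::'a::euclidean_space. (wt DIM('a) y)^2)"
proof (rule Bochner_Integration.integrable_bound[OF integrable_prod_weight])
  show "(\<lambda>y::'a. (wt DIM('a) y)^2) \<in> borel_measurable lborel"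
    using wt_continuous[of "DIM('a)", where 'a='a] by (intro cont_meas continuous_intros)
  show "AE x in lborel. norm ((wt DIM('a) (x::'a))^2) \<le> norm (\<Prod>b\<in>Basis. inverse (1 + (x \<bullet> b)^2))"
  proof (intro AE_I2)
    fix x :: 'a
    have "0 \<le> (\<Prod>b\<in>(Basis::'a set). inverse (1 + (x \<bullet> b)^2))" by (intro prod_nonneg) auto
    then show "norm ((wt DIM('a) x)^2) \<le> norm (\<Prod>b\<in>Basis. inverse (1 + (x \<bullet> b)^2))"
      using wt_sq_le_prod[of x] by simp
  qed
qed

definition Wc :: "'n::finite itself \<Rightarrow> real" where
  "Wc _ = sqrt (LINT y|lborel. (wt CARD('n) (y::real^'n))^2)"

lemma Wc_nonneg: "0 \<le> Wc TYPE('n::finite)"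
  unfolding Wc_def by simp

lemma sq_int_meas: "sq_int f \<Longrightarrow> f \<in> borel_measurable lborel"
  by (simp add: sq_int_def)

lemma sq_int_int: "sq_int f \<Longrightarrow> integrable lborel (\<lambda>x. (norm (f x))^2)"
  by (simp add: sq_int_def)

lemma l2_norm_nonneg: "0 \<le> l2_norm f"
  unfolding l2_norm_def by simp

lemma l2_norm_sq: "sq_int f \<Longrightarrow> (l2_norm f)^2 = (LINT x|lborel. (norm (f x))^2)"
  unfolding l2_norm_def by (simp add: integral_nonneg_AE)

lemma dom_l2:
  fixes f :: "real^'n \<Rightarrow> complex"
  assumes m: "f \<in> borel_measurable lborel" and b: "\<And>y. norm (f y) \<le> c * wt CARD('n) y"
  shows "sq_int f" "l2_norm f \<le> c * Wc TYPE('n)"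
proof -
  have c: "0 \<le> c" using b[of 0] wt_pos[of "CARD('n)" "0::real^'n"]
    by (meson norm_ge_zero order_trans zero_le_mult_iff not_le)
  have I: "integrable lborel (\<lambda>y::real^'n. c^2 * (wt CARD('n) y)^2)"
    using integrable_wt2[where 'a="real^'n"] by simp
  have pw: "(norm (f y))^2 \<le> c^2 * (wt CARD('n) y)^2" for y
  proof -
    have "(norm (f y))^2 \<le> (c * wt CARD('n) y)^2" using b[of y] by (intro power_mono) auto
    then show ?thesis by (simp add: power_mult_distrib)
  qed
  have I2: "integrable lborel (\<lambda>x. (norm (f x))^2)"
    by (rule Bochner_Integration.integrable_bound[OF I]) (use m pw in \<open>auto intro!: AE_I2 simp: wt_nonneg\<close>)
  show "sq_int f" unfolding sq_int_def using m I2 by simp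
  have "(LINT x|lborel. (norm (f x))^2) \<le> (LINT x|lborel. c^2 * (wt CARD('n) (x::real^'n))^2)"
    by (intro integral_mono_AE I2 I AE_I2 pw)
  also have "\<dots> = c^2 * (LINT x|lborel. (wt CARD('n) (x::real^'n))^2)" by simp
  finally have "sqrt (LINT x|lborel. (norm (f x))^2) \<le> sqrt (c^2 * (LINT x|lborel. (wt CARD('n) (x::real^'n))^2))"
    by (rule real_sqrt_le_mono)
  also have "\<dots> = c * Wc TYPE('n)" unfolding Wc_def using c by (simp add: real_sqrt_mult)
  finally show "l2_norm f \<le> c * Wc TYPE('n)" unfolding l2_norm_def .
qed

lemma sq_int_add:
  fixes f g :: "real^'n \<Rightarrow> complex"
  assumes "sq_int f" "sq_int g"
  shows "sq_int (\<lambda>y. f y + g y)"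
proof -
  have [measurable]: "f \<in> borel_measurable lborel" "g \<in> borel_measurable lborel"
    using assms by (auto simp: sq_int_def)
  have I: "integrable lborel (\<lambda>x. 2 * (norm (f x))^2 + 2 * (norm (g x))^2)"
    using assms by (auto simp: sq_int_def)
  have "integrable lborel (\<lambda>x. (norm (f x + g x))^2)"
  proof (rule Bochner_Integration.integrable_bound[OF I])
    show "(\<lambda>x. (norm (f x + g x))^2) \<in> borel_measurable lborel" by measurable
    show "AE x in lborel. norm ((norm (f x + g x))^2) \<le> norm (2 * (norm (f x))^2 + 2 * (norm (g x))^2)"
    proof (intro AE_I2)
      fix x
      have "norm (f x + g x) \<le> norm (f x) + norm (g x)" by (rule norm_triangle_ineq)
      then have "(norm (f x + g x))^2 \<le> (norm (f x) + norm (g x))^2" by (intro power_mono) auto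
      also have "\<dots> \<le> 2 * (norm (f x))^2 + 2 * (norm (g x))^2"
      proof -
        have e1: "(norm (f x) + norm (g x))^2 = (norm (f x))^2 + 2 * (norm (f x) * norm (g x)) + (norm (g x))^2"
          by (simp add: power2_eq_square algebra_simps)
        have e2: "(norm (f x) - norm (g x))^2 = (norm (f x))^2 - 2 * (norm (f x) * norm (g x)) + (norm (g x))^2"
          by (simp add: power2_eq_square algebra_simps)
        have "0 \<le> (norm (f x) - norm (g x))^2" by simp
        then show ?thesis using e1 e2 by linarith
      qed
      finally show "norm ((norm (f x + g x))^2) \<le> norm (2 * (norm (f x))^2 + 2 * (norm (g x))^2)" by simp
    qed
  qed
  then show ?thesis unfolding sq_int_def by simp
qed

lemma sq_int_cmult:
  fixes f :: "real^'n \<Rightarrow> complex"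
  assumes "sq_int f"
  shows "sq_int (\<lambda>y. c * f y)"
proof -
  have [measurable]: "f \<in> borel_measurable lborel" using assms by (auto simp: sq_int_def)
  have "integrable lborel (\<lambda>x. (norm c)^2 * (norm (f x))^2)" using assms by (auto simp: sq_int_def)
  then show ?thesis unfolding sq_int_def by (simp add: norm_mult power_mult_distrib)
qed

lemma sq_int_diff:
  fixes f g :: "real^'n \<Rightarrow> complex"
  assumes "sq_int f" "sq_int g"
  shows "sq_int (\<lambda>y. f y - g y)"
  using sq_int_add[OF assms(1) sq_int_cmult[OF assms(2), of "-1"]] by simp

lemma sq_int_sum:
  fixes f :: "'i \<Rightarrow> real^'n \<Rightarrow> complex"
  shows "finite I \<Longrightarrow> (\<And>i. i \<in> I \<Longrightarrow> sq_int (f i)) \<Longrightarrow> sq_int (\<lambda>y. \<Sum>i\<in>I. f i y)"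
proof (induction I rule: finite_induct)
  case empty
  show ?case unfolding sq_int_def by simp
next
  case (insert a I)
  then show ?case by (simp add: sq_int_add)
qed

lemma integrable_inner:
  fixes f g :: "real^'n \<Rightarrow> complex"
  assumes "sq_int f" "sq_int g"
  shows "integrable lborel (\<lambda>x. cnj (f x) * g x)"
proof -
  have [measurable]: "f \<in> borel_measurable lborel" "g \<in> borel_measurable lborel"
    using assms by (auto simp: sq_int_def)
  have I: "integrable lborel (\<lambda>x. (norm (f x))^2 + (norm (g x))^2)"
    using assms by (auto simp: sq_int_def)
  show ?thesis
  proof (rule Bochner_Integration.integrable_bound[OF I])
    show "(\<lambda>x. cnj (f x) * g x) \<in> borel_measurable lborel" by measurable
    show "AE x in lborel. norm (cnj (f x) * g x) \<le> norm ((norm (f x))^2 + (norm (g x))^2)"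
    proof (intro AE_I2)
      fix x
      have "norm (cnj (f x) * g x) = norm (f x) * norm (g x)" by (simp add: norm_mult)
      also have "\<dots> \<le> (norm (f x))^2 + (norm (g x))^2"
      proof -
        have e2: "(norm (f x) - norm (g x))^2 = (norm (f x))^2 - 2 * (norm (f x) * norm (g x)) + (norm (g x))^2"
          by (simp add: power2_eq_square algebra_simps)
        have "0 \<le> (norm (f x) - norm (g x))^2" by simp
        moreover have "0 \<le> norm (f x) * norm (g x)" by simp
        ultimately show ?thesis using e2 by linarith
      qed
      finally show "norm (cnj (f x) * g x) \<le> norm ((norm (f x))^2 + (norm (g x))^2)" by simp
    qed
  qed
qed

lemma real_cs_aux:
  fixes A B X :: real
  assumes A: "0 \<le> A" and B: "0 \<le> B" and H: "\<And>t. 0 < t \<Longrightarrow> X \<le> (t * A + B / t) / 2"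
  shows "X \<le> sqrt A * sqrt B"
proof (cases "A > 0 \<and> B > 0")
  case True
  define a where "a = sqrt A"
  define b where "b = sqrt B"
  have ab: "a > 0" "b > 0" "A = a^2" "B = b^2" using True A B unfolding a_def b_def by auto
  define t where "t = b / a"
  have t: "0 < t" using ab unfolding t_def by simp
  have "t * A = sqrt A * sqrt B" using ab unfolding t_def a_def[symmetric] b_def[symmetric]
    by (simp add: field_simps power2_eq_square)
  moreover have "B / t = sqrt A * sqrt B" using ab unfolding t_def a_def[symmetric] b_def[symmetric]
    by (simp add: field_simps power2_eq_square)
  ultimately show ?thesis using H[OF t] by simp
next
  case False
  then have z: "A = 0 \<or> B = 0" using A B by auto
  have "X \<le> 0"
  proof (rule ccontr)
    assume "\<not> X \<le> 0"
    then have X: "X > 0" by simp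
    show False
    proof (cases "A = 0")
      case True
      define t where "t = (B + 1) / X"
      have t: "t > 0" using X B unfolding t_def by simp
      have "B / t = B * X / (B + 1)" unfolding t_def using X B by (simp add: field_simps)
      also have "\<dots> < X" using X B by (simp add: field_simps)
      finally show False using H[OF t] True X by simp
    next
      case False
      then have B0: "B = 0" and Ap: "A > 0" using z A by auto
      define t where "t = X / A"
      have t: "t > 0" using X Ap unfolding t_def by simp
      have "t * A = X" unfolding t_def using Ap by simp
      then show False using H[OF t] B0 X by simp
    qed
  qed
  moreover have "0 \<le> sqrt A * sqrt B" using A B by simp
  ultimately show ?thesis by linarith
qed

lemma l2_cs:
  fixes f g :: "real^'n \<Rightarrow> complex"
  assumes f: "sq_int f" and g: "sq_int g"
  shows "norm (l2_inner f g) \<le> l2_norm f * l2_norm g"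
proof -
  have [measurable]: "f \<in> borel_measurable lborel" "g \<in> borel_measurable lborel"
    using assms by (auto simp: sq_int_def)
  have If: "integrable lborel (\<lambda>x. (norm (f x))^2)" and Ig: "integrable lborel (\<lambda>x. (norm (g x))^2)"
    using assms by (auto simp: sq_int_def)
  define A where "A = (LINT x|lborel. (norm (f x))^2)"
  define B where "B = (LINT x|lborel. (norm (g x))^2)"
  have A: "0 \<le> A" unfolding A_def by (simp add: integral_nonneg_AE)
  have B: "0 \<le> B" unfolding B_def by (simp add: integral_nonneg_AE)
  have "norm (l2_inner f g) \<le> sqrt A * sqrt B"
  proof (rule real_cs_aux[OF A B])
    fix t :: real assume t: "0 < t"
    have Ib: "integrable lborel (\<lambda>x. (t * (norm (f x))^2 + (norm (g x))^2 / t) / 2)"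
      using If Ig by simp
    have "norm (l2_inner f g) \<le> (LINT x|lborel. (t * (norm (f x))^2 + (norm (g x))^2 / t) / 2)"
      unfolding l2_inner_def
    proof (rule Bochner_Integration.integral_norm_bound_integral[OF integrable_inner[OF f g] Ib])
      fix x
      define s where "s = sqrt t"
      have s: "s > 0" "t = s^2" using t unfolding s_def by auto
      have "0 \<le> (s * norm (f x) - norm (g x) / s)^2" by simp
      also have "\<dots> = t * (norm (f x))^2 + (norm (g x))^2 / t - 2 * (norm (f x) * norm (g x))"
        using s by (simp add: power2_eq_square field_simps)
      finally show "norm (cnj (f x) * g x) \<le> (t * (norm (f x))^2 + (norm (g x))^2 / t) / 2"
        by (simp add: norm_mult)
    qed
    also have "\<dots> = (t * A + B / t) / 2" unfolding A_def B_def using If Ig by simp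
    finally show "norm (l2_inner f g) \<le> (t * A + B / t) / 2" .
  qed
  then show ?thesis unfolding l2_norm_def A_def B_def .
qed

lemma l2_inner_add_right:
  fixes f g1 g2 :: "real^'n \<Rightarrow> complex"
  assumes "sq_int f" "sq_int g1" "sq_int g2"
  shows "l2_inner f (\<lambda>y. g1 y + g2 y) = l2_inner f g1 + l2_inner f g2"
  unfolding l2_inner_def using integrable_inner[OF assms(1,2)] integrable_inner[OF assms(1,3)]
  by (simp add: distrib_left)

lemma l2_inner_add_left:
  fixes f1 f2 g :: "real^'n \<Rightarrow> complex"
  assumes "sq_int f1" "sq_int f2" "sq_int g"
  shows "l2_inner (\<lambda>y. f1 y + f2 y) g = l2_inner f1 g + l2_inner f2 g"
  unfolding l2_inner_def using integrable_inner[OF assms(1,3)] integrable_inner[OF assms(2,3)]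
  by (simp add: distrib_right)

lemma l2_inner_diff_left:
  fixes f1 f2 g :: "real^'n \<Rightarrow> complex"
  assumes "sq_int f1" "sq_int f2" "sq_int g"
  shows "l2_inner (\<lambda>y. f1 y - f2 y) g = l2_inner f1 g - l2_inner f2 g"
  unfolding l2_inner_def using integrable_inner[OF assms(1,3)] integrable_inner[OF assms(2,3)]
  by (simp add: left_diff_distrib)

lemma l2_inner_cmult_left:
  "l2_inner (\<lambda>y. c * f y) g = cnj c * l2_inner f g"
  unfolding l2_inner_def by (simp add: mult.assoc)

lemma l2_inner_cmult_right:
  "l2_inner f (\<lambda>y. c * g y) = c * l2_inner f g"
  unfolding l2_inner_def by (simp add: mult.left_commute)

lemma l2_inner_sum_left:
  fixes f :: "'i \<Rightarrow> real^'n \<Rightarrow> complex"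
  assumes "finite I" "\<And>i. i \<in> I \<Longrightarrow> sq_int (f i)" "sq_int g"
  shows "l2_inner (\<lambda>y. \<Sum>i\<in>I. f i y) g = (\<Sum>i\<in>I. l2_inner (f i) g)"
proof -
  have "l2_inner (\<lambda>y. \<Sum>i\<in>I. f i y) g = (LINT x|lborel. (\<Sum>i\<in>I. cnj (f i x) * g x))"
    unfolding l2_inner_def by (simp add: sum_distrib_right)
  also have "\<dots> = (\<Sum>i\<in>I. l2_inner (f i) g)"
    unfolding l2_inner_def by (rule Bochner_Integration.integral_sum) (use assms integrable_inner in auto)
  finally show ?thesis .
qed

lemma l2_inner_cong_AE:
  fixes f g g' :: "real^'n \<Rightarrow> complex"
  assumes "sq_int f" "sq_int g" "sq_int g'" "AE x in lborel. g x = g' x"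
  shows "l2_inner f g = l2_inner f g'"
  unfolding l2_inner_def
proof (rule integral_cong_AE)
  have [measurable]: "f \<in> borel_measurable lborel" "g \<in> borel_measurable lborel" "g' \<in> borel_measurable lborel"
    using assms by (auto simp: sq_int_def)
  show "(\<lambda>x. cnj (f x) * g x) \<in> borel_measurable lborel" by measurable
  show "(\<lambda>x. cnj (f x) * g' x) \<in> borel_measurable lborel" by measurable
  show "AE x in lborel. cnj (f x) * g x = cnj (f x) * g' x" using assms(4) by eventually_elim simp
qed


definition Q :: "((real^'n \<Rightarrow> complex) \<Rightarrow> (real^'n \<Rightarrow> complex)) \<Rightarrow> (real^'n \<Rightarrow> complex) \<Rightarrow> (real^'n \<Rightarrow> complex) \<Rightarrow> complex" where
  "Q \<rho> f g = l2_inner f (\<rho> g)"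

lemma sq_int_zero: "sq_int (\<lambda>y::real^'n. 0::complex)"
  unfolding sq_int_def by simp

context
  fixes \<rho> :: "(real^'n \<Rightarrow> complex) \<Rightarrow> (real^'n \<Rightarrow> complex)"
  assumes op: "l2_bounded_operator \<rho>"
begin

lemma op_sq: "sq_int f \<Longrightarrow> sq_int (\<rho> f)"
  using op unfolding l2_bounded_operator_def by blast

lemma op_add: "sq_int f \<Longrightarrow> sq_int g \<Longrightarrow> AE x in lborel. \<rho> (\<lambda>y. f y + g y) x = \<rho> f x + \<rho> g x"
  using op unfolding l2_bounded_operator_def by blast

lemma op_cmult: "sq_int f \<Longrightarrow> AE x in lborel. \<rho> (\<lambda>y. c * f y) x = c * \<rho> f x"
  using op unfolding l2_bounded_operator_def by blast

lemma op_bound: "\<exists>C\<ge>0. \<forall>f::real^'n \<Rightarrow> complex. sq_int f \<longrightarrow> l2_norm (\<rho> f) \<le> C * l2_norm f"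
proof -
  obtain C where C: "\<And>f::real^'n \<Rightarrow> complex. sq_int f \<Longrightarrow> l2_norm (\<rho> f) \<le> C * l2_norm f"
    using op unfolding l2_bounded_operator_def by blast
  show ?thesis
  proof (intro exI[of _ "max C 0"] conjI allI impI)
    fix f :: "real^'n \<Rightarrow> complex" assume "sq_int f"
    then have "l2_norm (\<rho> f) \<le> C * l2_norm f" by (rule C)
    also have "\<dots> \<le> max C 0 * l2_norm f" by (intro mult_right_mono) (auto simp: l2_norm_nonneg)
    finally show "l2_norm (\<rho> f) \<le> max C 0 * l2_norm f" .
  qed simp
qed

lemma Q_bound: "\<exists>C\<ge>0. \<forall>f g::real^'n \<Rightarrow> complex. sq_int f \<longrightarrow> sq_int g \<longrightarrow> norm (Q \<rho> f g) \<le> C * l2_norm f * l2_norm g"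
proof -
  obtain C where C0: "C \<ge> 0" and C: "\<And>f::real^'n \<Rightarrow> complex. sq_int f \<Longrightarrow> l2_norm (\<rho> f) \<le> C * l2_norm f"
    using op_bound by blast
  show ?thesis
  proof (intro exI[of _ C] conjI allI impI)
    fix f g :: "real^'n \<Rightarrow> complex" assume f: "sq_int f" and g: "sq_int g"
    have "norm (Q \<rho> f g) \<le> l2_norm f * l2_norm (\<rho> g)"
      unfolding Q_def by (rule l2_cs[OF f op_sq[OF g]])
    also have "\<dots> \<le> l2_norm f * (C * l2_norm g)"
      by (intro mult_left_mono C g l2_norm_nonneg)
    finally show "norm (Q \<rho> f g) \<le> C * l2_norm f * l2_norm g" by (simp add: mult_ac)
  qed (rule C0)
qed

lemma Q_add_right:
  assumes "sq_int f" "sq_int g1" "sq_int g2"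
  shows "Q \<rho> f (\<lambda>y. g1 y + g2 y) = Q \<rho> f g1 + Q \<rho> f g2"
proof -
  have "Q \<rho> f (\<lambda>y. g1 y + g2 y) = l2_inner f (\<lambda>x. \<rho> g1 x + \<rho> g2 x)"
    unfolding Q_def
    by (rule l2_inner_cong_AE[OF assms(1) op_sq[OF sq_int_add[OF assms(2,3)]] sq_int_add[OF op_sq[OF assms(2)] op_sq[OF assms(3)]] op_add[OF assms(2,3)]])
  also have "\<dots> = Q \<rho> f g1 + Q \<rho> f g2"
    unfolding Q_def by (rule l2_inner_add_right[OF assms(1) op_sq[OF assms(2)] op_sq[OF assms(3)]])
  finally show ?thesis .
qed

lemma Q_cmult_right:
  assumes "sq_int f" "sq_int g"
  shows "Q \<rho> f (\<lambda>y. c * g y) = c * Q \<rho> f g"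
proof -
  have "Q \<rho> f (\<lambda>y. c * g y) = l2_inner f (\<lambda>x. c * \<rho> g x)"
    unfolding Q_def
    by (rule l2_inner_cong_AE[OF assms(1) op_sq[OF sq_int_cmult[OF assms(2)]] sq_int_cmult[OF op_sq[OF assms(2)]] op_cmult[OF assms(2)]])
  also have "\<dots> = c * Q \<rho> f g"
    unfolding Q_def by (rule l2_inner_cmult_right)
  finally show ?thesis .
qed

lemma Q_diff_right:
  assumes "sq_int f" "sq_int g1" "sq_int g2"
  shows "Q \<rho> f (\<lambda>y. g1 y - g2 y) = Q \<rho> f g1 - Q \<rho> f g2"
proof -
  have "Q \<rho> f (\<lambda>y. g1 y - g2 y) = Q \<rho> f (\<lambda>y. g1 y + (\<lambda>y. (-1) * g2 y) y)" by simp
  also have "\<dots> = Q \<rho> f g1 + Q \<rho> f (\<lambda>y. (-1) * g2 y)"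
    by (rule Q_add_right[OF assms(1,2) sq_int_cmult[OF assms(3)]])
  also have "\<dots> = Q \<rho> f g1 - Q \<rho> f g2" using Q_cmult_right[OF assms(1,3), of "-1"] by simp
  finally show ?thesis .
qed

lemma Q_zero_right:
  assumes "sq_int f"
  shows "Q \<rho> f (\<lambda>y. 0) = 0"
  using Q_cmult_right[OF assms sq_int_zero, of 0] by simp

lemma Q_sum_right:
  fixes g :: "'i \<Rightarrow> real^'n \<Rightarrow> complex"
  assumes f: "sq_int f"
  shows "finite I \<Longrightarrow> (\<And>i. i \<in> I \<Longrightarrow> sq_int (g i)) \<Longrightarrow> Q \<rho> f (\<lambda>y. \<Sum>i\<in>I. g i y) = (\<Sum>i\<in>I. Q \<rho> f (g i))"
proof (induction I rule: finite_induct)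
  case empty
  then show ?case using Q_zero_right[OF f] by simp
next
  case (insert a I)
  have "Q \<rho> f (\<lambda>y. \<Sum>i\<in>insert a I. g i y) = Q \<rho> f (\<lambda>y. g a y + (\<Sum>i\<in>I. g i y))"
    using insert by simp
  also have "\<dots> = Q \<rho> f (g a) + Q \<rho> f (\<lambda>y. \<Sum>i\<in>I. g i y)"
    by (rule Q_add_right[OF f]) (use insert sq_int_sum in auto)
  also have "\<dots> = (\<Sum>i\<in>insert a I. Q \<rho> f (g i))" using insert by simp
  finally show ?case .
qed

lemma Q_add_left:
  assumes "sq_int f1" "sq_int f2" "sq_int g"
  shows "Q \<rho> (\<lambda>y. f1 y + f2 y) g = Q \<rho> f1 g + Q \<rho> f2 g"
  unfolding Q_def by (rule l2_inner_add_left[OF assms(1,2) op_sq[OF assms(3)]])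

lemma Q_diff_left:
  assumes "sq_int f1" "sq_int f2" "sq_int g"
  shows "Q \<rho> (\<lambda>y. f1 y - f2 y) g = Q \<rho> f1 g - Q \<rho> f2 g"
  unfolding Q_def by (rule l2_inner_diff_left[OF assms(1,2) op_sq[OF assms(3)]])

lemma Q_cmult_left: "Q \<rho> (\<lambda>y. c * f y) g = cnj c * Q \<rho> f g"
  unfolding Q_def by (rule l2_inner_cmult_left)

lemma Q_sum_left:
  fixes f :: "'i \<Rightarrow> real^'n \<Rightarrow> complex"
  assumes "finite I" "\<And>i. i \<in> I \<Longrightarrow> sq_int (f i)" "sq_int g"
  shows "Q \<rho> (\<lambda>y. \<Sum>i\<in>I. f i y) g = (\<Sum>i\<in>I. Q \<rho> (f i) g)"
  unfolding Q_def by (rule l2_inner_sum_left[OF assms(1,2) op_sq[OF assms(3)]])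

end


lemma lin_expand:
  fixes L :: "'a::euclidean_space \<Rightarrow> complex"
  assumes lin: "linear L"
  shows "L u = (\<Sum>b\<in>Basis. complex_of_real (u \<bullet> b) * L b)"
proof -
  have "L u = L (\<Sum>b\<in>Basis. (u \<bullet> b) *\<^sub>R b)" by (simp add: euclidean_representation)
  also have "\<dots> = (\<Sum>b\<in>Basis. L ((u \<bullet> b) *\<^sub>R b))" by (simp add: linear_sum[OF lin] o_def)
  also have "\<dots> = (\<Sum>b\<in>Basis. (u \<bullet> b) *\<^sub>R L b)" by (simp add: linear.scaleR[OF lin])
  also have "\<dots> = (\<Sum>b\<in>Basis. complex_of_real (u \<bullet> b) * L b)" by (simp add: scaleR_conv_of_real)
  finally show ?thesis .
qed

definition Gd :: "('a::euclidean_space \<Rightarrow> complex) \<Rightarrow> 'a \<Rightarrow> 'a \<Rightarrow> complex" where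
  "Gd F u = (\<lambda>y. frechet_derivative F (at y) u)"

lemma schwartz_diff0: "schwartz F \<Longrightarrow> F differentiable (at y)"
  using schwartz_diff[of F "[]"] by simp

lemma schwartz_hasd: "schwartz F \<Longrightarrow> (F has_derivative frechet_derivative F (at y)) (at y)"
  using schwartz_diff0 frechet_derivative_works by blast

lemma Gd_eq: "schwartz F \<Longrightarrow> Gd F u y = (\<Sum>b\<in>Basis. complex_of_real (u \<bullet> b) * iter_partial [b] F y)"
  unfolding Gd_def using lin_expand[OF linear_frechet_derivative[OF schwartz_diff0]] by simp

lemma Gd_neg: "schwartz F \<Longrightarrow> Gd F (- u) y = - Gd F u y"
  by (simp add: Gd_eq sum_negf[symmetric])

lemma Gd_deriv:
  assumes F: "schwartz F"
  shows "(Gd F u has_derivative (\<lambda>w. \<Sum>b\<in>Basis. complex_of_real (u \<bullet> b) * frechet_derivative (iter_partial [b] F) (at y) w)) (at y)"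
proof -
  have e: "Gd F u = (\<lambda>y. \<Sum>b\<in>Basis. complex_of_real (u \<bullet> b) * iter_partial [b] F y)"
    using Gd_eq[OF F] by blast
  have d: "\<And>b. b \<in> Basis \<Longrightarrow> (iter_partial [b] F has_derivative frechet_derivative (iter_partial [b] F) (at y)) (at y)"
    using schwartz_hasd[OF schwartz_partial[OF F]] by blast
  show ?thesis unfolding e
    by (intro has_derivative_sum has_derivative_mult_right d)
qed

lemma bound_nonneg: "(\<And>y. norm (f y) \<le> C * wt M y) \<Longrightarrow> 0 \<le> C"
  by (metis norm_ge_zero order_trans wt_pos zero_le_mult_iff not_le)

lemma S0: "schwartz F \<Longrightarrow> \<exists>C\<ge>0. \<forall>y. norm (F y) \<le> C * wt M y"
proof -
  assume F: "schwartz F"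
  have "RD (iter_partial [] F)" by (rule schwartz_RD[OF F]) simp
  then obtain C where C: "\<And>y. norm (F y) \<le> C * wt M y" unfolding RD_def by auto
  then have "0 \<le> C" by (rule bound_nonneg)
  with C show ?thesis by blast
qed

lemma S1:
  fixes F :: "real^'a \<Rightarrow> complex"
  assumes F: "schwartz F"
  shows "\<exists>C\<ge>0. \<forall>y u. norm (Gd F u y) \<le> C * norm u * wt M y"
proof -
  have "\<forall>b\<in>Basis. \<exists>C. \<forall>y. norm (iter_partial [b] F y) \<le> C * wt M y"
  proof
    fix b :: "real^'a" assume b: "b \<in> Basis"
    have "RD (iter_partial [b] F)" by (rule schwartz_RD[OF F]) (use b in simp)
    then show "\<exists>C. \<forall>y. norm (iter_partial [b] F y) \<le> C * wt M y" unfolding RD_def by blast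
  qed
  then obtain C where C: "\<And>b y. b \<in> Basis \<Longrightarrow> norm (iter_partial [b] F y) \<le> C b * wt M y" by metis
  have Cn: "\<And>b. b \<in> Basis \<Longrightarrow> 0 \<le> C b" using C bound_nonneg by blast
  show ?thesis
  proof (intro exI[of _ "\<Sum>b\<in>Basis. C b"] conjI allI)
    show "0 \<le> (\<Sum>b\<in>Basis. C b)" using Cn by (simp add: sum_nonneg)
    fix y u
    have "norm (Gd F u y) \<le> (\<Sum>b\<in>Basis. norm (complex_of_real (u \<bullet> b) * iter_partial [b] F y))"
      unfolding Gd_eq[OF F] by (rule norm_sum)
    also have "\<dots> \<le> (\<Sum>b\<in>Basis. norm u * (C b * wt M y))"
    proof (intro sum_mono)
      fix b :: "real^'a" assume b: "b \<in> Basis"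
      have "norm (complex_of_real (u \<bullet> b) * iter_partial [b] F y) = \<bar>u \<bullet> b\<bar> * norm (iter_partial [b] F y)"
        by (simp add: norm_mult)
      also have "\<dots> \<le> norm u * (C b * wt M y)"
        by (intro mult_mono Basis_le_norm b C) auto
      finally show "norm (complex_of_real (u \<bullet> b) * iter_partial [b] F y) \<le> norm u * (C b * wt M y)" .
    qed
    also have "\<dots> = (\<Sum>b\<in>Basis. C b) * norm u * wt M y"
      by (simp add: sum_distrib_left sum_distrib_right mult_ac)
    finally show "norm (Gd F u y) \<le> (\<Sum>b\<in>Basis. C b) * norm u * wt M y" .
  qed
qed

lemma S2:
  assumes F: "schwartz (F :: real^'a \<Rightarrow> complex)"
  shows "\<exists>C\<ge>0. \<forall>y u w. norm (\<Sum>b\<in>Basis. complex_of_real (u \<bullet> b) * frechet_derivative (iter_partial [b] F) (at y) w) \<le> C * norm u * norm w * wt M y"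
proof -
  have "\<forall>b\<in>Basis. \<exists>C\<ge>0. \<forall>y w. norm (Gd (iter_partial [b] F) w y) \<le> C * norm w * wt M y"
    using S1[OF schwartz_partial[OF F]] by blast
  then obtain C where C: "\<And>b y w. b \<in> Basis \<Longrightarrow> norm (Gd (iter_partial [b] F) w y) \<le> C b * norm w * wt M y"
    and Cn: "\<And>b. b \<in> Basis \<Longrightarrow> 0 \<le> C b" by metis
  show ?thesis
  proof (intro exI[of _ "\<Sum>b\<in>Basis. C b"] conjI allI)
    show "0 \<le> (\<Sum>b\<in>Basis. C b)" using Cn by (simp add: sum_nonneg)
    fix y u w
    have "norm (\<Sum>b\<in>Basis. complex_of_real (u \<bullet> b) * frechet_derivative (iter_partial [b] F) (at y) w)
        \<le> (\<Sum>b\<in>Basis. norm (complex_of_real (u \<bullet> b) * frechet_derivative (iter_partial [b] F) (at y) w))"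
      by (rule norm_sum)
    also have "\<dots> \<le> (\<Sum>b\<in>Basis. norm u * (C b * norm w * wt M y))"
    proof (intro sum_mono)
      fix b :: "real^'a" assume b: "b \<in> Basis"
      have "norm (complex_of_real (u \<bullet> b) * frechet_derivative (iter_partial [b] F) (at y) w) = \<bar>u \<bullet> b\<bar> * norm (Gd (iter_partial [b] F) w y)"
        by (simp add: norm_mult Gd_def)
      also have "\<dots> \<le> norm u * (C b * norm w * wt M y)"
        by (intro mult_mono Basis_le_norm b C) auto
      finally show "norm (complex_of_real (u \<bullet> b) * frechet_derivative (iter_partial [b] F) (at y) w) \<le> norm u * (C b * norm w * wt M y)" .
    qed
    also have "\<dots> = (\<Sum>b\<in>Basis. C b) * norm u * norm w * wt M y"
      by (simp add: sum_distrib_left sum_distrib_right mult_ac)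
    finally show "norm (\<Sum>b\<in>Basis. complex_of_real (u \<bullet> b) * frechet_derivative (iter_partial [b] F) (at y) w) \<le> (\<Sum>b\<in>Basis. C b) * norm u * norm w * wt M y" .
  qed
qed

lemma line_vd:
  assumes "(g has_derivative g') (at (y - t *\<^sub>R s))"
  shows "((\<lambda>t. g (y - t *\<^sub>R s)) has_vector_derivative g' (- s)) (at t)"
proof -
  have "((g \<circ> (\<lambda>t. y - t *\<^sub>R s)) has_derivative (g' \<circ> (\<lambda>r. - (r *\<^sub>R s)))) (at t)"
    by (intro diff_chain_at assms) (auto intro!: derivative_eq_intros)
  moreover have "linear g'" using assms has_derivative_linear by blast
  ultimately show ?thesis unfolding has_vector_derivative_def
    by (simp add: o_def linear.scaleR linear_neg)
qed

lemma line_bounds: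
  fixes F :: "real^'a \<Rightarrow> complex"
  assumes F: "schwartz F"
  shows "\<exists>C\<ge>0. \<forall>y s. norm s \<le> 1 \<longrightarrow>
     norm (F (y - s)) \<le> C * wt M y \<and>
     norm (F (y - s) - F y) \<le> C * norm s * wt M y \<and>
     norm (F (y - s) - F y + Gd F s y) \<le> C * (norm s)^2 * wt M y \<and>
     norm (Gd F s y) \<le> C * norm s * wt M y"
proof -
  obtain C0 where C0: "C0 \<ge> 0" "\<And>y. norm (F y) \<le> C0 * wt M y" using S0[OF F] by blast
  obtain C1 where C1: "C1 \<ge> 0" "\<And>y u. norm (Gd F u y) \<le> C1 * norm u * wt M y" using S1[OF F] by blast
  obtain C2 where C2: "C2 \<ge> 0" "\<And>y u w. norm (\<Sum>b\<in>Basis. complex_of_real (u \<bullet> b) * frechet_derivative (iter_partial [b] F) (at y) w) \<le> C2 * norm u * norm w * wt M y"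
    using S2[OF F] by blast
  define C where "C = 2^M * (C0 + C1 + C2)"
  show ?thesis
  proof (intro exI[of _ C] conjI allI impI)
    show "0 \<le> C" unfolding C_def using C0 C1 C2 by simp
    have p1: "(1::real) \<le> 2^M" by simp
    have cC0: "2^M * C0 \<le> C" unfolding C_def using C1 C2 by (intro mult_left_mono) auto
    have cC1: "2^M * C1 \<le> C" unfolding C_def using C0 C2 by (intro mult_left_mono) auto
    have cC2: "2^M * C2 \<le> C" unfolding C_def using C0 C1 by (intro mult_left_mono) auto
    have cC1': "C1 \<le> C" using cC1 C1 p1 by (meson mult_le_cancel_right1 order_trans not_le less_le_trans)
    fix y s :: "real^'a" assume s: "norm s \<le> 1"
    have wpos: "0 \<le> wt M y" by (rule wt_nonneg)
    have sh: "wt M (y - t *\<^sub>R s) \<le> 2^M * wt M y" if "t \<in> {0..1}" for t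
      using wt_shift1[of "t *\<^sub>R s" M y] that s by (auto simp: mult_le_one)
    show "norm (F (y - s)) \<le> C * wt M y"
    proof -
      have "norm (F (y - s)) \<le> C0 * wt M (y - s)" by (rule C0)
      also have "\<dots> \<le> C0 * (2^M * wt M y)" using wt_shift1[OF s, of M y] C0 by (intro mult_left_mono) auto
      also have "\<dots> = (2^M * C0) * wt M y" by (simp add: mult_ac)
      also have "\<dots> \<le> C * wt M y" using cC0 wpos by (rule mult_right_mono)
      finally show ?thesis .
    qed
    show "norm (Gd F s y) \<le> C * norm s * wt M y"
    proof -
      have "norm (Gd F s y) \<le> C1 * norm s * wt M y" by (rule C1)
      also have "\<dots> \<le> C * norm s * wt M y" using cC1' wpos by (intro mult_right_mono) auto
      finally show ?thesis .
    qed
    define f where "f t = F (y - t *\<^sub>R s)" for t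
    define f' where "f' t = - Gd F s (y - t *\<^sub>R s)" for t
    have df: "(f has_vector_derivative f' t) (at t)" for t
      unfolding f_def f'_def using line_vd[where y=y and t=t and s=s, OF schwartz_hasd[OF F]] Gd_neg[OF F, of s]
      by (simp add: Gd_def)
    have f'b: "norm (f' t) \<le> C1 * norm s * (2^M * wt M y)" if "t \<in> {0..1}" for t
    proof -
      have "norm (f' t) \<le> C1 * norm s * wt M (y - t *\<^sub>R s)" unfolding f'_def using C1(2) by simp
      also have "\<dots> \<le> C1 * norm s * (2^M * wt M y)" using sh[OF that] C1 by (intro mult_left_mono) auto
      finally show ?thesis .
    qed
    have "norm (f 1 - f 0) \<le> (C1 * norm s * (2^M * wt M y)) * 1"
      by (rule mvt_cplx[of 1 f f']) (use df f'b in auto)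
    also have "(C1 * norm s * (2^M * wt M y)) * 1 = (2^M * C1) * (norm s * wt M y)" by (simp add: mult_ac)
    also have "\<dots> \<le> C * (norm s * wt M y)" using cC1 wpos by (intro mult_right_mono) auto
    finally show "norm (F (y - s) - F y) \<le> C * norm s * wt M y"
      unfolding f_def by (simp add: mult_ac)
    define g2 where "g2 r = Gd F s (y - r *\<^sub>R s)" for r
    define g2' where "g2' r = (\<Sum>b\<in>Basis. complex_of_real (s \<bullet> b) * frechet_derivative (iter_partial [b] F) (at (y - r *\<^sub>R s)) (- s))" for r
    have dg2: "(g2 has_vector_derivative g2' r) (at r)" for r
      unfolding g2_def g2'_def by (rule line_vd[OF Gd_deriv[OF F]])
    have g2b: "norm (g2' r) \<le> C2 * norm s * norm s * (2^M * wt M y)" if "r \<in> {0..1}" for r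
    proof -
      have "norm (g2' r) \<le> C2 * norm s * norm (- s) * wt M (y - r *\<^sub>R s)" unfolding g2'_def by (rule C2(2))
      also have "\<dots> = (C2 * norm s * norm s) * wt M (y - r *\<^sub>R s)" by simp
      also have "\<dots> \<le> (C2 * norm s * norm s) * (2^M * wt M y)" using sh[OF that] C2(1) by (intro mult_left_mono) auto
      finally show ?thesis .
    qed
    have f'd: "norm (f' t - f' 0) \<le> C2 * norm s * norm s * (2^M * wt M y)" if t: "t \<in> {0..1}" for t
    proof -
      have "norm (g2 t - g2 0) \<le> (C2 * norm s * norm s * (2^M * wt M y)) * t"
        by (rule mvt_cplx[of 1 g2 g2']) (use dg2 g2b t in auto)
      also have "\<dots> \<le> C2 * norm s * norm s * (2^M * wt M y)"
        using t C2 wt_pos[of M y] by (intro mult_left_le) auto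
      finally show ?thesis unfolding f'_def g2_def by (simp add: norm_minus_commute)
    qed
    have "norm (f 1 - f 0 - 1 *\<^sub>R f' 0) \<le> 1 * (C2 * norm s * norm s * (2^M * wt M y))"
      by (rule taylor2_cplx) (use df f'd in auto)
    then have "norm (F (y - s) - F y + Gd F s y) \<le> C2 * norm s * norm s * (2^M * wt M y)"
      unfolding f_def f'_def by simp
    also have "\<dots> = (2^M * C2) * ((norm s)^2 * wt M y)" by (simp add: mult_ac power2_eq_square)
    also have "\<dots> \<le> C * ((norm s)^2 * wt M y)" using cC2 wpos by (intro mult_right_mono) auto
    finally show "norm (F (y - s) - F y + Gd F s y) \<le> C * (norm s)^2 * wt M y" by (simp add: mult_ac)
  qed
qed


definition l0 :: "(real^'n \<Rightarrow> complex) \<Rightarrow> ((real^'n) \<times> (real^'n)) \<Rightarrow> real^'n \<Rightarrow> complex" where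
  "l0 F h y = \<i> * complex_of_real (y \<bullet> snd h) * F y - Gd F (fst h) y"

definition c1 :: "((real^'n) \<times> (real^'n)) \<Rightarrow> ((real^'n) \<times> (real^'n)) \<Rightarrow> real" where
  "c1 \<xi> h = (fst \<xi> \<bullet> snd h - fst h \<bullet> snd \<xi>) / 2"

definition U :: "(real^'n \<Rightarrow> complex) \<Rightarrow> ((real^'n) \<times> (real^'n)) \<Rightarrow> ((real^'n) \<times> (real^'n)) \<Rightarrow> real^'n \<Rightarrow> complex" where
  "U F \<xi> h y = displace \<xi> (l0 F h) y + \<i> * complex_of_real (c1 \<xi> h) * displace \<xi> F y"

lemma iexp1: "norm (exp (\<i> * complex_of_real d) - 1) \<le> \<bar>d\<bar>"
  using iexp_approx1[of d 0] by simp

lemma iexp2: "norm (exp (\<i> * complex_of_real d) - (1 + \<i> * complex_of_real d)) \<le> d^2"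
proof -
  have "norm (exp (\<i> * complex_of_real d) - (1 + \<i> * complex_of_real d)) \<le> \<bar>d\<bar> ^ Suc 1 / fact (Suc 1)"
    using iexp_approx1[of d 1] by simp
  also have "\<dots> \<le> d^2"
  proof -
    have "0 \<le> d * d" by simp
    then show ?thesis by (simp add: power2_eq_square; linarith)
  qed
  finally show ?thesis .
qed

lemma bracket:
  fixes P0 Ps G :: complex and d a c q :: real
  assumes dd: "d = a + c - q"
  shows "norm (exp (\<i> * complex_of_real d) * Ps - P0 - \<i> * complex_of_real a * P0 + G - \<i> * complex_of_real c * P0)
     \<le> d^2 * norm Ps + \<bar>d\<bar> * norm (Ps - P0) + \<bar>q\<bar> * norm P0 + norm (Ps - P0 + G)"
proof -
  define T1 where "T1 = (exp (\<i> * complex_of_real d) - (1 + \<i> * complex_of_real d)) * Ps"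
  define T2 where "T2 = \<i> * complex_of_real d * (Ps - P0)"
  define T3 where "T3 = \<i> * complex_of_real (- q) * P0"
  define T4 where "T4 = Ps - P0 + G"
  have e: "exp (\<i> * complex_of_real d) * Ps - P0 - \<i> * complex_of_real a * P0 + G - \<i> * complex_of_real c * P0
      = T1 + T2 + T3 + T4"
  proof -
    have dd': "complex_of_real d = complex_of_real a + complex_of_real c - complex_of_real q" using dd by simp
    show ?thesis unfolding T1_def T2_def T3_def T4_def dd' of_real_minus by algebra
  qed
  have n1: "norm T1 \<le> d^2 * norm Ps" unfolding T1_def norm_mult by (intro mult_right_mono iexp2) auto
  have n2: "norm T2 = \<bar>d\<bar> * norm (Ps - P0)" unfolding T2_def by (simp add: norm_mult)
  have n3: "norm T3 = \<bar>q\<bar> * norm P0" unfolding T3_def by (simp add: norm_mult)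
  have "norm (T1 + T2 + T3 + T4) \<le> norm (T1 + T2 + T3) + norm T4" by (rule norm_triangle_ineq)
  moreover have "norm (T1 + T2 + T3) \<le> norm (T1 + T2) + norm T3" by (rule norm_triangle_ineq)
  moreover have "norm (T1 + T2) \<le> norm T1 + norm T2" by (rule norm_triangle_ineq)
  ultimately have "norm (T1 + T2 + T3 + T4) \<le> norm T1 + norm T2 + norm T3 + norm T4" by linarith
  then show ?thesis unfolding e T4_def[symmetric] using n1 n2 n3 by linarith
qed

lemma bracket2:
  fixes P0 Ps :: complex and d :: real
  shows "norm (exp (\<i> * complex_of_real d) * Ps - P0) \<le> \<bar>d\<bar> * norm Ps + norm (Ps - P0)"
proof -
  have "exp (\<i> * complex_of_real d) * Ps - P0 = (exp (\<i> * complex_of_real d) - 1) * Ps + (Ps - P0)"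
    by (simp add: algebra_simps)
  also have "norm \<dots> \<le> norm ((exp (\<i> * complex_of_real d) - 1) * Ps) + norm (Ps - P0)" by (rule norm_triangle_ineq)
  also have "norm ((exp (\<i> * complex_of_real d) - 1) * Ps) \<le> \<bar>d\<bar> * norm Ps"
    unfolding norm_mult by (intro mult_right_mono iexp1) auto
  finally show ?thesis by simp
qed

lemma arith_R:
  fixes C W Y A nh d q p1 p2 p3 p4 :: real
  assumes C: "0 \<le> C" and W: "0 \<le> W" and Y: "1 \<le> Y" and A: "1 \<le> A" and nh: "0 \<le> nh"
    and d: "\<bar>d\<bar> \<le> nh * A * Y" and q: "\<bar>q\<bar> \<le> nh^2"
    and p1: "p1 \<le> C * W" and p2: "p2 \<le> C * nh * W" and p3: "p3 \<le> C * W" and p4: "p4 \<le> C * nh^2 * W"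
    and pn: "0 \<le> p1" "0 \<le> p2" "0 \<le> p3"
  shows "d^2 * p1 + \<bar>d\<bar> * p2 + \<bar>q\<bar> * p3 + p4 \<le> nh^2 * (C * (A^2 + A + 2)) * (W * Y^2)"
proof -
  have t1: "d^2 * p1 \<le> (nh * A * Y)^2 * (C * W)"
  proof (rule mult_mono)
    have "\<bar>d\<bar>^2 \<le> (nh * A * Y)^2" by (rule power_mono[OF d]) simp
    then show "d^2 \<le> (nh * A * Y)^2" unfolding power2_abs .
  qed (use p1 pn C W in auto)
  have t2: "\<bar>d\<bar> * p2 \<le> (nh * A * Y) * (C * nh * W)"
    by (rule mult_mono) (use d p2 pn nh A Y in auto)
  have t3: "\<bar>q\<bar> * p3 \<le> nh^2 * (C * W)"
    by (rule mult_mono) (use q p3 pn in auto)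
  have Y2: "1 \<le> Y^2" using Y by (simp add: one_le_power)
  have YY: "Y \<le> Y^2" using Y by (simp add: power2_eq_square)
  have AY: "A * Y \<le> A * Y^2" using YY A by (simp add: mult_left_mono)
  have k: "0 \<le> nh^2 * C * W" using C W nh by simp
  have "(A^2 + A + 2) * Y^2 = A^2 * Y^2 + A * Y^2 + 2 * Y^2" by algebra
  then have "A^2 * Y^2 + A * Y + 2 \<le> (A^2 + A + 2) * Y^2" using AY Y2 by linarith
  then have "nh^2 * C * W * (A^2 * Y^2 + A * Y + 2) \<le> nh^2 * C * W * ((A^2 + A + 2) * Y^2)"
    using k by (rule mult_left_mono)
  moreover have "(nh * A * Y)^2 * (C * W) + (nh * A * Y) * (C * nh * W) + nh^2 * (C * W) + C * nh^2 * W
     = nh^2 * C * W * (A^2 * Y^2 + A * Y + 2)" by algebra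
  moreover have "nh^2 * C * W * ((A^2 + A + 2) * Y^2) = nh^2 * (C * (A^2 + A + 2)) * (W * Y^2)"
    by algebra
  ultimately show ?thesis using t1 t2 t3 p4 by linarith
qed

lemma inner_le_prod: "\<bar>(a::'a::real_inner) \<bullet> b\<bar> \<le> norm a * norm b"
  by (rule Cauchy_Schwarz_ineq2)


lemma schwartz_cont: "schwartz F \<Longrightarrow> continuous_on UNIV F"
  by (intro differentiable_imp_continuous_on differentiable_at_imp_differentiable_on schwartz_diff0)

lemma Gd_cont:
  assumes "schwartz (F::real^'n \<Rightarrow> complex)"
  shows "continuous_on UNIV (Gd F u)"
proof -
  have e: "Gd F u = (\<lambda>y. \<Sum>b\<in>Basis. complex_of_real (u \<bullet> b) * iter_partial [b] F y)"
    using Gd_eq[OF assms] by blast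
  have c: "\<And>b. b \<in> Basis \<Longrightarrow> continuous_on UNIV (iter_partial [b] F)"
    using schwartz_cont[OF schwartz_partial[OF assms]] by blast
  show ?thesis unfolding e by (intro continuous_on_sum continuous_on_mult continuous_on_const c)
qed

lemma shift_cont:
  fixes f :: "'a::real_normed_vector \<Rightarrow> 'b::topological_space"
  shows "continuous_on UNIV f \<Longrightarrow> continuous_on UNIV (\<lambda>y. f (y - a))"
  by (rule continuous_on_compose2[of UNIV f]) (auto intro!: continuous_on_diff continuous_on_id continuous_on_const)

lemma disp_eq: "displace \<xi> F = (\<lambda>y. exp (\<i> * complex_of_real ((y - (1/2) *\<^sub>R fst \<xi>) \<bullet> snd \<xi>)) * F (y - fst \<xi>))"
  by (rule ext) (simp add: displace_def)

lemma disp_cont: "continuous_on UNIV F \<Longrightarrow> continuous_on UNIV (displace \<xi> F)"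
  unfolding disp_eq by (intro continuous_intros shift_cont)

lemma l0_cont: "schwartz F \<Longrightarrow> continuous_on UNIV (l0 F h)"
proof -
  assume F: "schwartz F"
  have "l0 F h = (\<lambda>y. \<i> * complex_of_real (y \<bullet> snd h) * F y - Gd F (fst h) y)"
    by (rule ext) (simp add: l0_def)
  then show ?thesis using schwartz_cont[OF F] Gd_cont[OF F]
    by (simp add: continuous_intros)
qed

lemma U_cont: "schwartz F \<Longrightarrow> continuous_on UNIV (U F \<xi> h)"
proof -
  assume F: "schwartz F"
  have "U F \<xi> h = (\<lambda>y. displace \<xi> (l0 F h) y + \<i> * complex_of_real (c1 \<xi> h) * displace \<xi> F y)"
    by (rule ext) (simp add: U_def)
  then show ?thesis using disp_cont[OF l0_cont[OF F]] disp_cont[OF schwartz_cont[OF F]]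
    by (simp add: continuous_intros)
qed

lemma arith_D:
  fixes C W Y A nh d p1 p2 :: real
  assumes C: "0 \<le> C" and W: "0 \<le> W" and Y: "1 \<le> Y" and A: "1 \<le> A" and nh: "0 \<le> nh"
    and d: "\<bar>d\<bar> \<le> nh * A * Y" and p1: "p1 \<le> C * W" and p2: "p2 \<le> C * nh * W" and pn: "0 \<le> p1"
  shows "\<bar>d\<bar> * p1 + p2 \<le> nh * (C * (A^2 + A + 2)) * (W * Y^2)"
proof -
  have t1: "\<bar>d\<bar> * p1 \<le> (nh * A * Y) * (C * W)" by (rule mult_mono) (use d p1 pn C W in auto)
  have Y2: "1 \<le> Y^2" using Y by (simp add: one_le_power)
  have YY: "Y \<le> Y^2" using Y by (simp add: power2_eq_square)
  have A2: "0 \<le> A^2" by simp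
  have k: "0 \<le> nh * C * W" using C W nh by simp
  have "A * Y + 1 \<le> (A^2 + A + 2) * Y^2"
  proof -
    have "(A^2 + A + 2) * Y^2 = A^2 * Y^2 + A * Y^2 + 2 * Y^2" by algebra
    moreover have "A * Y \<le> A * Y^2" using YY A by (simp add: mult_left_mono)
    moreover have "0 \<le> A^2 * Y^2" by simp
    ultimately show ?thesis using Y2 by linarith
  qed
  then have "nh * C * W * (A * Y + 1) \<le> nh * C * W * ((A^2 + A + 2) * Y^2)" using k by (rule mult_left_mono)
  moreover have "(nh * A * Y) * (C * W) + C * nh * W = nh * C * W * (A * Y + 1)" by algebra
  moreover have "nh * C * W * ((A^2 + A + 2) * Y^2) = nh * (C * (A^2 + A + 2)) * (W * Y^2)" by algebra
  ultimately show ?thesis using t1 p2 by linarith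
qed

lemma arith_U:
  fixes C W Y A nh a c p0 g :: real
  assumes C: "0 \<le> C" and W: "0 \<le> W" and Y: "1 \<le> Y" and A: "1 \<le> A" and nh: "0 \<le> nh"
    and a: "\<bar>a\<bar> \<le> Y * nh" and c: "\<bar>c\<bar> \<le> A * nh" and p0: "p0 \<le> C * W" and g: "g \<le> C * nh * W" and pn: "0 \<le> p0"
  shows "\<bar>a\<bar> * p0 + g + \<bar>c\<bar> * p0 \<le> nh * (C * (A^2 + A + 2)) * (W * Y^2)"
proof -
  have t1: "\<bar>a\<bar> * p0 \<le> (Y * nh) * (C * W)" by (rule mult_mono) (use a p0 pn C W nh Y in auto)
  have t3: "\<bar>c\<bar> * p0 \<le> (A * nh) * (C * W)" by (rule mult_mono) (use c p0 pn C W nh A in auto)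
  have Y2: "1 \<le> Y^2" using Y by (simp add: one_le_power)
  have YY: "Y \<le> Y^2" using Y by (simp add: power2_eq_square)
  have k: "0 \<le> nh * C * W" using C W nh by simp
  have "Y + 1 + A \<le> (A^2 + A + 2) * Y^2"
  proof -
    have "(A^2 + A + 2) * Y^2 = A^2 * Y^2 + A * Y^2 + 2 * Y^2" by algebra
    moreover have "A * 1 \<le> A * Y^2" using Y2 A by (intro mult_left_mono) auto
    moreover have "0 \<le> A^2 * Y^2" by simp
    ultimately show ?thesis using Y2 YY by linarith
  qed
  then have "nh * C * W * (Y + 1 + A) \<le> nh * C * W * ((A^2 + A + 2) * Y^2)" using k by (rule mult_left_mono)
  moreover have "(Y * nh) * (C * W) + C * nh * W + (A * nh) * (C * W) = nh * C * W * (Y + 1 + A)" by algebra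
  moreover have "nh * C * W * ((A^2 + A + 2) * Y^2) = nh * (C * (A^2 + A + 2)) * (W * Y^2)" by algebra
  ultimately show ?thesis using t1 t3 g by linarith
qed

lemma norm_fst_le': "norm (fst h) \<le> norm h"
  using norm_fst_le[of "fst h" "snd h"] by simp

lemma norm_snd_le': "norm (snd h) \<le> norm h"
  using norm_snd_le[of "snd h" "fst h"] by simp

lemma disp_est:
  fixes F :: "real^'n \<Rightarrow> complex"
  assumes F: "schwartz F"
  shows "\<exists>K\<ge>0. \<forall>h y. norm h \<le> 1 \<longrightarrow>
     norm (displace (\<xi> + h) F y - displace \<xi> F y - U F \<xi> h y) \<le> K * (norm h)^2 * wt CARD('n) y \<and>
     norm (displace (\<xi> + h) F y - displace \<xi> F y) \<le> K * norm h * wt CARD('n) y \<and>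
     norm (U F \<xi> h y) \<le> K * norm h * wt CARD('n) y"
proof -
  define d where "d = CARD('n)"
  obtain C where C0: "C \<ge> 0" and C: "\<And>y s. norm s \<le> 1 \<Longrightarrow> norm (F (y - s)) \<le> C * wt (2 + d) y \<and>
     norm (F (y - s) - F y) \<le> C * norm s * wt (2 + d) y \<and>
     norm (F (y - s) - F y + Gd F s y) \<le> C * (norm s)^2 * wt (2 + d) y \<and>
     norm (Gd F s y) \<le> C * norm s * wt (2 + d) y"
    using line_bounds[OF F, of "2 + d"] by blast
  define A where "A = 1 + norm \<xi>"
  define K where "K = C * (A^2 + A + 2) * A^d"
  have A1: "1 \<le> A" unfolding A_def by simp
  show ?thesis
  proof (intro exI[of _ K] conjI allI impI)
    show "0 \<le> K" unfolding K_def using C0 A1 by simp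
    fix h :: "(real^'n) \<times> (real^'n)" and y :: "real^'n"
    assume h: "norm h \<le> 1"
    define hx where "hx = fst h"
    define hp where "hp = snd h"
    define X where "X = fst \<xi>"
    define P where "P = snd \<xi>"
    define y' where "y' = y - X"
    define E where "E = exp (\<i> * complex_of_real ((y - (1/2) *\<^sub>R X) \<bullet> P))"
    define q where "q = (hx \<bullet> hp) / 2"
    define a where "a = y' \<bullet> hp"
    define c where "c = c1 \<xi> h"
    define dl where "dl = a + c - q"
    define W where "W = wt (2 + d) y'"
    define Y where "Y = 1 + norm y'"
    define nh where "nh = norm h"
    have hx1: "norm hx \<le> nh" "norm hp \<le> nh" unfolding hx_def hp_def nh_def by (auto simp: norm_fst_le' norm_snd_le')
    have X1: "norm X \<le> norm \<xi>" "norm P \<le> norm \<xi>" unfolding X_def P_def by (auto simp: norm_fst_le' norm_snd_le')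
    have nh1: "nh \<le> 1" "0 \<le> nh" unfolding nh_def using h by auto
    have hxs: "norm hx \<le> 1" using hx1 nh1 by linarith
    have Wn: "0 \<le> W" unfolding W_def by (rule wt_nonneg)
    have Y1: "1 \<le> Y" unfolding Y_def by simp
    have e1: "displace (\<xi> + h) F y = E * (exp (\<i> * complex_of_real dl) * F (y' - hx))"
    proof -
      have th: "(y - (1/2) *\<^sub>R fst (\<xi> + h)) \<bullet> snd (\<xi> + h) = (y - (1/2) *\<^sub>R X) \<bullet> P + dl"
        unfolding dl_def a_def c_def q_def c1_def y'_def X_def P_def hx_def hp_def
        by (simp add: inner_add_left inner_add_right inner_diff_left inner_diff_right algebra_simps) (simp add: field_simps)
      have yy: "y - fst (\<xi> + h) = y' - hx" unfolding y'_def X_def hx_def by simp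
      show ?thesis unfolding displace_def th yy E_def by (simp add: distrib_left exp_add mult.assoc)
    qed
    have e2: "displace \<xi> F y = E * F y'" unfolding displace_def E_def y'_def X_def P_def by simp
    have e3: "U F \<xi> h y = E * (\<i> * complex_of_real a * F y' - Gd F hx y') + \<i> * complex_of_real c * (E * F y')"
      unfolding U_def displace_def l0_def E_def y'_def X_def P_def hx_def hp_def a_def c_def by simp
    have nE: "norm E = 1" unfolding E_def by simp
    have Cy: "norm (F (y' - hx)) \<le> C * W \<and> norm (F (y' - hx) - F y') \<le> C * norm hx * W \<and>
       norm (F (y' - hx) - F y' + Gd F hx y') \<le> C * (norm hx)^2 * W \<and> norm (Gd F hx y') \<le> C * norm hx * W"
      unfolding W_def by (rule C[OF hxs])
    have b1: "norm (F (y' - hx)) \<le> C * W" using Cy by blast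
    have b2: "norm (F (y' - hx) - F y') \<le> C * nh * W"
      using Cy C0 Wn hx1 by (meson mult_left_mono mult_right_mono order_trans zero_le_mult_iff)
    have b3: "norm (F (y' - hx) - F y' + Gd F hx y') \<le> C * nh^2 * W"
    proof -
      have "(norm hx)^2 \<le> nh^2" using hx1 by (intro power_mono) auto
      then have "C * (norm hx)^2 * W \<le> C * nh^2 * W" using C0 Wn by (intro mult_right_mono mult_left_mono) auto
      then show ?thesis using Cy by linarith
    qed
    have b4: "norm (Gd F hx y') \<le> C * nh * W"
      using Cy C0 Wn hx1 by (meson mult_left_mono mult_right_mono order_trans zero_le_mult_iff)
    have b0: "norm (F y') \<le> C * W" using C[of 0 y'] unfolding W_def by simp
    have aa: "\<bar>a\<bar> \<le> norm y' * nh"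
      unfolding a_def using inner_le_prod[of y' hp] hx1 by (meson mult_left_mono norm_ge_zero order_trans)
    have cc: "\<bar>c\<bar> \<le> norm \<xi> * nh"
    proof -
      have "\<bar>X \<bullet> hp\<bar> \<le> norm \<xi> * nh" using inner_le_prod[of X hp] X1 hx1
        by (meson mult_mono norm_ge_zero order_trans)
      moreover have "\<bar>hx \<bullet> P\<bar> \<le> norm \<xi> * nh" using inner_le_prod[of hx P] X1 hx1
        by (metis mult.commute mult_mono norm_ge_zero order_trans)
      ultimately show ?thesis unfolding c_def c1_def X_def[symmetric] P_def[symmetric] hx_def[symmetric] hp_def[symmetric]
        by (simp add: abs_diff_le_iff) linarith
    qed
    have qq: "\<bar>q\<bar> \<le> nh^2"
    proof -
      have "\<bar>hx \<bullet> hp\<bar> \<le> nh * nh" using inner_le_prod[of hx hp] hx1 by (meson mult_mono norm_ge_zero order_trans)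
      moreover have "0 \<le> nh * nh" using nh1 by simp
      ultimately show ?thesis unfolding q_def by (simp add: power2_eq_square)
    qed
    have qq1: "\<bar>q\<bar> \<le> nh"
      using qq nh1 by (metis power2_eq_square mult_left_le order_trans)
    have dd: "\<bar>dl\<bar> \<le> nh * A * Y"
    proof -
      have "\<bar>dl\<bar> \<le> \<bar>a\<bar> + \<bar>c\<bar> + \<bar>q\<bar>" unfolding dl_def by linarith
      also have "\<dots> \<le> norm y' * nh + norm \<xi> * nh + nh" using aa cc qq1 by linarith
      also have "\<dots> = nh * (norm y' + norm \<xi> + 1)" by (simp add: algebra_simps)
      also have "\<dots> \<le> nh * (A * Y)"
      proof (intro mult_left_mono nh1)
        have "A * Y = 1 + norm \<xi> + norm y' + norm \<xi> * norm y'" unfolding A_def Y_def by (simp add: algebra_simps)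
        moreover have "0 \<le> norm \<xi> * norm y'" by simp
        ultimately show "norm y' + norm \<xi> + 1 \<le> A * Y" by linarith
      qed
      finally show ?thesis by (simp add: mult.assoc)
    qed
    have WY: "W * Y^2 \<le> A^d * wt d y"
    proof -
      have "W * Y^2 = wt d y'" unfolding W_def Y_def using wt_mult'[of y' 2 d] by (simp add: mult.commute)
      also have "\<dots> \<le> (1 + norm X)^d * wt d y" unfolding y'_def by (rule wt_shift)
      also have "\<dots> \<le> A^d * wt d y" unfolding A_def using X1 by (intro mult_right_mono power_mono wt_nonneg) auto
      finally show ?thesis .
    qed
    have KK: "0 \<le> C * (A^2 + A + 2)" using C0 A1 by simp
    show "norm (displace (\<xi> + h) F y - displace \<xi> F y - U F \<xi> h y) \<le> K * (norm h)^2 * wt CARD('n) y"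
    proof -
      have "displace (\<xi> + h) F y - displace \<xi> F y - U F \<xi> h y =
          E * (exp (\<i> * complex_of_real dl) * F (y' - hx) - F y' - \<i> * complex_of_real a * F y' + Gd F hx y' - \<i> * complex_of_real c * F y')"
        unfolding e1 e2 e3 by (simp add: algebra_simps)
      then have "norm (displace (\<xi> + h) F y - displace \<xi> F y - U F \<xi> h y) =
          norm (exp (\<i> * complex_of_real dl) * F (y' - hx) - F y' - \<i> * complex_of_real a * F y' + Gd F hx y' - \<i> * complex_of_real c * F y')"
        by (simp add: norm_mult nE)
      also have "\<dots> \<le> dl^2 * norm (F (y' - hx)) + \<bar>dl\<bar> * norm (F (y' - hx) - F y') + \<bar>q\<bar> * norm (F y') + norm (F (y' - hx) - F y' + Gd F hx y')"
        by (rule bracket) (simp add: dl_def)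
      also have "\<dots> \<le> nh^2 * (C * (A^2 + A + 2)) * (W * Y^2)"
        by (rule arith_R[OF C0 Wn Y1 A1 nh1(2) dd qq b1 b2 b0 b3]) auto
      also have "\<dots> \<le> nh^2 * (C * (A^2 + A + 2)) * (A^d * wt d y)"
        using WY KK by (intro mult_left_mono) auto
      also have "\<dots> = K * (norm h)^2 * wt CARD('n) y" unfolding K_def nh_def d_def by (simp add: mult_ac)
      finally show ?thesis .
    qed
    show "norm (displace (\<xi> + h) F y - displace \<xi> F y) \<le> K * norm h * wt CARD('n) y"
    proof -
      have "displace (\<xi> + h) F y - displace \<xi> F y = E * (exp (\<i> * complex_of_real dl) * F (y' - hx) - F y')"
        unfolding e1 e2 by (simp add: algebra_simps)
      then have "norm (displace (\<xi> + h) F y - displace \<xi> F y) = norm (exp (\<i> * complex_of_real dl) * F (y' - hx) - F y')"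
        by (simp add: norm_mult nE)
      also have "\<dots> \<le> \<bar>dl\<bar> * norm (F (y' - hx)) + norm (F (y' - hx) - F y')" by (rule bracket2)
      also have "\<dots> \<le> nh * (C * (A^2 + A + 2)) * (W * Y^2)"
        by (rule arith_D[OF C0 Wn Y1 A1 nh1(2) dd b1 b2]) auto
      also have "\<dots> \<le> nh * (C * (A^2 + A + 2)) * (A^d * wt d y)"
        using WY KK nh1 by (intro mult_left_mono) auto
      also have "\<dots> = K * norm h * wt CARD('n) y" unfolding K_def nh_def d_def by (simp add: mult_ac)
      finally show ?thesis .
    qed
    show "norm (U F \<xi> h y) \<le> K * norm h * wt CARD('n) y"
    proof -
      have "norm (U F \<xi> h y) \<le> norm (E * (\<i> * complex_of_real a * F y' - Gd F hx y')) + norm (\<i> * complex_of_real c * (E * F y'))"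
        unfolding e3 by (rule norm_triangle_ineq)
      also have "norm (E * (\<i> * complex_of_real a * F y' - Gd F hx y')) \<le> \<bar>a\<bar> * norm (F y') + norm (Gd F hx y')"
      proof -
        have "norm (E * (\<i> * complex_of_real a * F y' - Gd F hx y')) = norm (\<i> * complex_of_real a * F y' - Gd F hx y')"
          by (simp add: norm_mult nE)
        also have "\<dots> \<le> norm (\<i> * complex_of_real a * F y') + norm (Gd F hx y')" by (rule norm_triangle_ineq4)
        also have "norm (\<i> * complex_of_real a * F y') = \<bar>a\<bar> * norm (F y')" by (simp add: norm_mult)
        finally show ?thesis .
      qed
      also have "norm (\<i> * complex_of_real c * (E * F y')) = \<bar>c\<bar> * norm (F y')" by (simp add: norm_mult nE)
      also have "\<bar>a\<bar> * norm (F y') + norm (Gd F hx y') + \<bar>c\<bar> * norm (F y') \<le> nh * (C * (A^2 + A + 2)) * (W * Y^2)"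
      proof (rule arith_U[OF C0 Wn Y1 A1 nh1(2) _ _ b0 b4])
        show "\<bar>a\<bar> \<le> Y * nh" using aa nh1 unfolding Y_def by (smt (verit) mult_right_mono)
        show "\<bar>c\<bar> \<le> A * nh" using cc nh1 unfolding A_def by (smt (verit) mult_right_mono)
      qed auto
      also have "\<dots> \<le> nh * (C * (A^2 + A + 2)) * (A^d * wt d y)"
        using WY KK nh1 by (intro mult_left_mono) auto
      also have "\<dots> = K * norm h * wt CARD('n) y" unfolding K_def nh_def d_def by (simp add: mult_ac)
      finally show ?thesis by simp
    qed
  qed
qed


lemma disp_bound:
  fixes F :: "real^'n \<Rightarrow> complex"
  assumes F: "schwartz F"
  shows "\<exists>C\<ge>0. \<forall>\<xi> y. norm (displace \<xi> F y) \<le> C * (1 + norm \<xi>)^CARD('n) * wt CARD('n) y"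
proof -
  obtain C where C0: "C \<ge> 0" and C: "\<And>y. norm (F y) \<le> C * wt CARD('n) y" using S0[OF F] by blast
  show ?thesis
  proof (intro exI[of _ C] conjI allI)
    fix \<xi> :: "(real^'n) \<times> (real^'n)" and y :: "real^'n"
    have "norm (displace \<xi> F y) = norm (F (y - fst \<xi>))" by (simp add: displace_def norm_mult)
    also have "\<dots> \<le> C * wt CARD('n) (y - fst \<xi>)" by (rule C)
    also have "\<dots> \<le> C * ((1 + norm (fst \<xi>))^CARD('n) * wt CARD('n) y)" using C0 by (intro mult_left_mono wt_shift)
    also have "\<dots> \<le> C * ((1 + norm \<xi>)^CARD('n) * wt CARD('n) y)"
      using C0 norm_fst_le[of "fst \<xi>" "snd \<xi>"] by (intro mult_left_mono mult_right_mono power_mono wt_nonneg) auto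
    finally show "norm (displace \<xi> F y) \<le> C * (1 + norm \<xi>)^CARD('n) * wt CARD('n) y" by (simp add: mult_ac)
  qed (rule C0)
qed

lemma disp_sq: "schwartz (F :: real^'n \<Rightarrow> complex) \<Longrightarrow> sq_int (displace \<xi> F)"
proof -
  assume F: "schwartz F"
  obtain C where "\<And>\<xi> y. norm (displace \<xi> F y) \<le> C * (1 + norm \<xi>)^CARD('n) * wt CARD('n) y"
    using disp_bound[OF F] by blast
  then show ?thesis
    by (intro dom_l2(1)[where c="C * (1 + norm \<xi>)^CARD('n)"] cont_meas disp_cont schwartz_cont F) auto
qed

lemma disp_l2:
  fixes F :: "real^'n \<Rightarrow> complex"
  assumes F: "schwartz F"
  shows "\<exists>C\<ge>0. \<forall>\<xi>. l2_norm (displace \<xi> F) \<le> C * (1 + norm \<xi>)^CARD('n) * Wc TYPE('n)"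
proof -
  obtain C where C0: "C \<ge> 0" and C: "\<And>\<xi> y. norm (displace \<xi> F y) \<le> C * (1 + norm \<xi>)^CARD('n) * wt CARD('n) y"
    using disp_bound[OF F] by blast
  show ?thesis
    by (intro exI[of _ C] conjI allI C0 dom_l2(2)[where c="C * (1 + norm _)^CARD('n)"] cont_meas disp_cont schwartz_cont F C)
qed

lemma disp_est_l2:
  fixes F :: "real^'n \<Rightarrow> complex"
  assumes F: "schwartz F"
  shows "\<exists>K\<ge>0. \<forall>h. norm h \<le> 1 \<longrightarrow>
     sq_int (\<lambda>y. displace (\<xi> + h) F y - displace \<xi> F y - U F \<xi> h y) \<and>
     l2_norm (\<lambda>y. displace (\<xi> + h) F y - displace \<xi> F y - U F \<xi> h y) \<le> K * (norm h)^2 * Wc TYPE('n) \<and>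
     sq_int (\<lambda>y. displace (\<xi> + h) F y - displace \<xi> F y) \<and>
     l2_norm (\<lambda>y. displace (\<xi> + h) F y - displace \<xi> F y) \<le> K * norm h * Wc TYPE('n) \<and>
     sq_int (U F \<xi> h) \<and> l2_norm (U F \<xi> h) \<le> K * norm h * Wc TYPE('n)"
proof -
  obtain K where K0: "K \<ge> 0" and K: "\<And>h y. norm h \<le> 1 \<Longrightarrow>
     norm (displace (\<xi> + h) F y - displace \<xi> F y - U F \<xi> h y) \<le> K * (norm h)^2 * wt CARD('n) y \<and>
     norm (displace (\<xi> + h) F y - displace \<xi> F y) \<le> K * norm h * wt CARD('n) y \<and>
     norm (U F \<xi> h y) \<le> K * norm h * wt CARD('n) y"
    using disp_est[OF F, of \<xi>] by blast
  have c1: "continuous_on UNIV (displace \<xi>' F)" for \<xi>' by (intro disp_cont schwartz_cont F)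
  have c2: "continuous_on UNIV (U F \<xi> h)" for h by (intro U_cont F)
  have m1: "(\<lambda>y. displace (\<xi> + h) F y - displace \<xi> F y - U F \<xi> h y) \<in> borel_measurable lborel" for h
    by (intro cont_meas continuous_on_diff c1 c2)
  have m2: "(\<lambda>y. displace (\<xi> + h) F y - displace \<xi> F y) \<in> borel_measurable lborel" for h
    by (intro cont_meas continuous_on_diff c1)
  have m3: "U F \<xi> h \<in> borel_measurable lborel" for h by (intro cont_meas c2)
  show ?thesis
  proof (intro exI[of _ K] conjI allI impI K0)
    fix h :: "(real^'n) \<times> (real^'n)" assume h: "norm h \<le> 1"
    have b1: "\<And>y. norm (displace (\<xi> + h) F y - displace \<xi> F y - U F \<xi> h y) \<le> (K * (norm h)^2) * wt CARD('n) y"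
      using K[OF h] by blast
    have b2: "\<And>y. norm (displace (\<xi> + h) F y - displace \<xi> F y) \<le> (K * norm h) * wt CARD('n) y"
      using K[OF h] by blast
    have b3: "\<And>y. norm (U F \<xi> h y) \<le> (K * norm h) * wt CARD('n) y"
      using K[OF h] by blast
    show "sq_int (\<lambda>y. displace (\<xi> + h) F y - displace \<xi> F y - U F \<xi> h y)" by (rule dom_l2(1)[OF m1 b1])
    show "l2_norm (\<lambda>y. displace (\<xi> + h) F y - displace \<xi> F y - U F \<xi> h y) \<le> K * (norm h)^2 * Wc TYPE('n)" by (rule dom_l2(2)[OF m1 b1])
    show "sq_int (\<lambda>y. displace (\<xi> + h) F y - displace \<xi> F y)" by (rule dom_l2(1)[OF m2 b2])
    show "l2_norm (\<lambda>y. displace (\<xi> + h) F y - displace \<xi> F y) \<le> K * norm h * Wc TYPE('n)" by (rule dom_l2(2)[OF m2 b2])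
    show "sq_int (U F \<xi> h)" by (rule dom_l2(1)[OF m3 b3])
    show "l2_norm (U F \<xi> h) \<le> K * norm h * Wc TYPE('n)" by (rule dom_l2(2)[OF m3 b3])
  qed
qed

lemma U_expand:
  fixes F :: "real^'n \<Rightarrow> complex"
  assumes F: "schwartz F"
  shows "U F \<xi> h y = (\<Sum>b\<in>Basis. \<i> * complex_of_real (snd h \<bullet> b) * displace \<xi> (Xw b F) y
            - complex_of_real (fst h \<bullet> b) * displace \<xi> (iter_partial [b] F) y)
         + \<i> * complex_of_real (c1 \<xi> h) * displace \<xi> F y"
proof -
  define E where "E = exp (\<i> * complex_of_real ((y - (1/2) *\<^sub>R fst \<xi>) \<bullet> snd \<xi>))"
  define y' where "y' = y - fst \<xi>"
  have i1: "y' \<bullet> snd h = (\<Sum>b\<in>Basis. (snd h \<bullet> b) * (y' \<bullet> b))"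
    by (subst euclidean_inner) (simp add: mult.commute)
  have "displace \<xi> (l0 F h) y = E * (\<i> * complex_of_real (y' \<bullet> snd h) * F y' - Gd F (fst h) y')"
    unfolding displace_def l0_def E_def y'_def ..
  also have "\<dots> = (\<Sum>b\<in>Basis. \<i> * complex_of_real (snd h \<bullet> b) * (E * (complex_of_real (y' \<bullet> b) * F y'))
            - complex_of_real (fst h \<bullet> b) * (E * iter_partial [b] F y'))"
    unfolding i1 Gd_eq[OF F] of_real_sum
    by (simp add: sum_distrib_left sum_distrib_right sum_subtractf algebra_simps)
  also have "\<dots> = (\<Sum>b\<in>Basis. \<i> * complex_of_real (snd h \<bullet> b) * displace \<xi> (Xw b F) y
            - complex_of_real (fst h \<bullet> b) * displace \<xi> (iter_partial [b] F) y)"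
    unfolding displace_def Xw_def E_def y'_def by simp
  finally show ?thesis unfolding U_def by simp
qed

lemma U_sq:
  fixes F :: "real^'n \<Rightarrow> complex"
  assumes F: "schwartz F"
  shows "sq_int (U F \<xi> h)"
proof -
  have e: "U F \<xi> h = (\<lambda>y. (\<Sum>b\<in>Basis. \<i> * complex_of_real (snd h \<bullet> b) * displace \<xi> (Xw b F) y
            - complex_of_real (fst h \<bullet> b) * displace \<xi> (iter_partial [b] F) y)
         + \<i> * complex_of_real (c1 \<xi> h) * displace \<xi> F y)"
    using U_expand[OF F] by blast
  have sX: "\<And>b. b \<in> Basis \<Longrightarrow> sq_int (displace \<xi> (Xw b F))" by (intro disp_sq schwartz_Xw F)
  have sP: "\<And>b. b \<in> Basis \<Longrightarrow> sq_int (displace \<xi> (iter_partial [b] F))" by (intro disp_sq schwartz_partial F)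
  show ?thesis unfolding e
    by (intro sq_int_add sq_int_sum sq_int_diff sq_int_cmult sX sP disp_sq F finite_Basis)
qed


type_synonym 'n ph = "(real^'n) \<times> (real^'n)"
type_synonym 'n zz = "'n ph \<times> 'n ph"
type_synonym 'n rop = "(real^'n \<Rightarrow> complex) \<Rightarrow> (real^'n \<Rightarrow> complex)"

definition Bf :: "'n rop \<Rightarrow> (real^'n \<Rightarrow> complex) \<Rightarrow> (real^'n \<Rightarrow> complex) \<Rightarrow> 'n zz \<Rightarrow> complex" where
  "Bf \<rho> F G z = Q \<rho> (displace (fst z) F) (displace (snd z) G)"

definition DB :: "'n rop \<Rightarrow> (real^'n \<Rightarrow> complex) \<Rightarrow> (real^'n \<Rightarrow> complex) \<Rightarrow> 'n zz \<Rightarrow> 'n zz \<Rightarrow> complex" where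
  "DB \<rho> F G z v = Q \<rho> (U F (fst z) (fst v)) (displace (snd z) G) + Q \<rho> (displace (fst z) F) (U G (snd z) (snd v))"

lemma Gd_add: "schwartz F \<Longrightarrow> Gd F (u1 + u2) y = Gd F u1 y + Gd F u2 y"
  by (simp add: Gd_eq inner_add_left distrib_right sum.distrib)

lemma Gd_scale: "schwartz F \<Longrightarrow> Gd F (r *\<^sub>R u) y = complex_of_real r * Gd F u y"
  by (simp add: Gd_eq sum_distrib_left mult.assoc)

lemma U_add:
  fixes F :: "real^'n \<Rightarrow> complex"
  assumes F: "schwartz F"
  shows "U F \<xi> (h1 + h2) = (\<lambda>y. U F \<xi> h1 y + U F \<xi> h2 y)"
  by (rule ext) (simp add: U_def displace_def l0_def c1_def Gd_add[OF F] inner_add_left inner_add_right algebra_simps add_divide_distrib diff_divide_distrib)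

lemma U_scale:
  fixes F :: "real^'n \<Rightarrow> complex"
  assumes F: "schwartz F"
  shows "U F \<xi> (r *\<^sub>R h) = (\<lambda>y. complex_of_real r * U F \<xi> h y)"
  by (rule ext) (simp add: U_def displace_def l0_def c1_def Gd_scale[OF F] algebra_simps)

context
  fixes \<rho> :: "('n::finite) rop"
  assumes op: "l2_bounded_operator \<rho>"
begin

lemma DB_linear:
  assumes F: "schwartz F" and G: "schwartz G"
  shows "bounded_linear (DB \<rho> F G z)"
proof -
  have "linear (DB \<rho> F G z)"
  proof (rule linearI)
    fix v1 v2 :: "'n zz"
    show "DB \<rho> F G z (v1 + v2) = DB \<rho> F G z v1 + DB \<rho> F G z v2"
      unfolding DB_def fst_add snd_add U_add[OF F] U_add[OF G]
      by (simp add: Q_add_left[OF op] Q_add_right[OF op] U_sq F G disp_sq)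
  next
    fix r :: real and v :: "'n zz"
    show "DB \<rho> F G z (r *\<^sub>R v) = r *\<^sub>R DB \<rho> F G z v"
      unfolding DB_def fst_scaleR snd_scaleR U_scale[OF F] U_scale[OF G]
      by (simp add: Q_cmult_left[OF op] Q_cmult_right[OF op] U_sq F G disp_sq scaleR_conv_of_real distrib_left)
  qed
  then show ?thesis by (simp add: linear_conv_bounded_linear)
qed

lemma Q_U_left:
  assumes F: "schwartz F" and g: "sq_int g"
  shows "Q \<rho> (U F \<xi> h) g =
    (\<Sum>b\<in>Basis. - \<i> * complex_of_real (snd h \<bullet> b) * Q \<rho> (displace \<xi> (Xw b F)) g
       - complex_of_real (fst h \<bullet> b) * Q \<rho> (displace \<xi> (iter_partial [b] F)) g)
    - \<i> * complex_of_real (c1 \<xi> h) * Q \<rho> (displace \<xi> F) g"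
proof -
  have sX: "\<And>b. b \<in> Basis \<Longrightarrow> sq_int (displace \<xi> (Xw b F))" by (intro disp_sq schwartz_Xw F)
  have sP: "\<And>b. b \<in> Basis \<Longrightarrow> sq_int (displace \<xi> (iter_partial [b] F))" by (intro disp_sq schwartz_partial F)
  have s0: "sq_int (displace \<xi> F)" by (intro disp_sq F)
  define T where "T b y = \<i> * complex_of_real (snd h \<bullet> b) * displace \<xi> (Xw b F) y
            - complex_of_real (fst h \<bullet> b) * displace \<xi> (iter_partial [b] F) y" for b y
  have sT: "\<And>b. b \<in> Basis \<Longrightarrow> sq_int (T b)" unfolding T_def[abs_def]
    by (intro sq_int_diff sq_int_cmult sX sP)
  have e: "U F \<xi> h = (\<lambda>y. (\<Sum>b\<in>Basis. T b y) + \<i> * complex_of_real (c1 \<xi> h) * displace \<xi> F y)"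
    unfolding T_def using U_expand[OF F] by blast
  have "Q \<rho> (U F \<xi> h) g = Q \<rho> (\<lambda>y. \<Sum>b\<in>Basis. T b y) g + Q \<rho> (\<lambda>y. \<i> * complex_of_real (c1 \<xi> h) * displace \<xi> F y) g"
    unfolding e by (rule Q_add_left[OF op]) (auto intro: sq_int_sum sT sq_int_cmult s0 g)
  also have "Q \<rho> (\<lambda>y. \<Sum>b\<in>Basis. T b y) g = (\<Sum>b\<in>Basis. Q \<rho> (T b) g)"
    by (rule Q_sum_left[OF op]) (auto intro: sT g)
  also have "\<dots> = (\<Sum>b\<in>Basis. - \<i> * complex_of_real (snd h \<bullet> b) * Q \<rho> (displace \<xi> (Xw b F)) g
       - complex_of_real (fst h \<bullet> b) * Q \<rho> (displace \<xi> (iter_partial [b] F)) g)"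
  proof (rule sum.cong[OF refl])
    fix b :: "real^'n" assume b: "b \<in> Basis"
    have "Q \<rho> (T b) g = Q \<rho> (\<lambda>y. \<i> * complex_of_real (snd h \<bullet> b) * displace \<xi> (Xw b F) y) g
        - Q \<rho> (\<lambda>y. complex_of_real (fst h \<bullet> b) * displace \<xi> (iter_partial [b] F) y) g"
      unfolding T_def by (rule Q_diff_left[OF op sq_int_cmult[OF sX[OF b]] sq_int_cmult[OF sP[OF b]] g])
    then show "Q \<rho> (T b) g = - \<i> * complex_of_real (snd h \<bullet> b) * Q \<rho> (displace \<xi> (Xw b F)) g
       - complex_of_real (fst h \<bullet> b) * Q \<rho> (displace \<xi> (iter_partial [b] F)) g"
      by (simp add: Q_cmult_left[OF op])
  qed
  also have "Q \<rho> (\<lambda>y. \<i> * complex_of_real (c1 \<xi> h) * displace \<xi> F y) g = - \<i> * complex_of_real (c1 \<xi> h) * Q \<rho> (displace \<xi> F) g"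
    by (simp add: Q_cmult_left[OF op])
  finally show ?thesis by simp
qed

lemma Q_U_right:
  assumes G: "schwartz G" and f: "sq_int f"
  shows "Q \<rho> f (U G \<xi> k) =
    (\<Sum>b\<in>Basis. \<i> * complex_of_real (snd k \<bullet> b) * Q \<rho> f (displace \<xi> (Xw b G))
       - complex_of_real (fst k \<bullet> b) * Q \<rho> f (displace \<xi> (iter_partial [b] G)))
    + \<i> * complex_of_real (c1 \<xi> k) * Q \<rho> f (displace \<xi> G)"
proof -
  have sX: "\<And>b. b \<in> Basis \<Longrightarrow> sq_int (displace \<xi> (Xw b G))" by (intro disp_sq schwartz_Xw G)
  have sP: "\<And>b. b \<in> Basis \<Longrightarrow> sq_int (displace \<xi> (iter_partial [b] G))" by (intro disp_sq schwartz_partial G)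
  have s0: "sq_int (displace \<xi> G)" by (intro disp_sq G)
  define T where "T b y = \<i> * complex_of_real (snd k \<bullet> b) * displace \<xi> (Xw b G) y
            - complex_of_real (fst k \<bullet> b) * displace \<xi> (iter_partial [b] G) y" for b y
  have sT: "\<And>b. b \<in> Basis \<Longrightarrow> sq_int (T b)" unfolding T_def[abs_def]
    by (intro sq_int_diff sq_int_cmult sX sP)
  have e: "U G \<xi> k = (\<lambda>y. (\<Sum>b\<in>Basis. T b y) + \<i> * complex_of_real (c1 \<xi> k) * displace \<xi> G y)"
    unfolding T_def using U_expand[OF G] by blast
  have "Q \<rho> f (U G \<xi> k) = Q \<rho> f (\<lambda>y. \<Sum>b\<in>Basis. T b y) + Q \<rho> f (\<lambda>y. \<i> * complex_of_real (c1 \<xi> k) * displace \<xi> G y)"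
    unfolding e by (rule Q_add_right[OF op]) (auto intro: sq_int_sum sT sq_int_cmult s0 f)
  also have "Q \<rho> f (\<lambda>y. \<Sum>b\<in>Basis. T b y) = (\<Sum>b\<in>Basis. Q \<rho> f (T b))"
    by (rule Q_sum_right[OF op f]) (auto intro: sT)
  also have "\<dots> = (\<Sum>b\<in>Basis. \<i> * complex_of_real (snd k \<bullet> b) * Q \<rho> f (displace \<xi> (Xw b G))
       - complex_of_real (fst k \<bullet> b) * Q \<rho> f (displace \<xi> (iter_partial [b] G)))"
  proof (rule sum.cong[OF refl])
    fix b :: "real^'n" assume b: "b \<in> Basis"
    have "Q \<rho> f (T b) = Q \<rho> f (\<lambda>y. \<i> * complex_of_real (snd k \<bullet> b) * displace \<xi> (Xw b G) y)
        - Q \<rho> f (\<lambda>y. complex_of_real (fst k \<bullet> b) * displace \<xi> (iter_partial [b] G) y)"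
      unfolding T_def by (rule Q_diff_right[OF op f sq_int_cmult[OF sX[OF b]] sq_int_cmult[OF sP[OF b]]])
    then show "Q \<rho> f (T b) = \<i> * complex_of_real (snd k \<bullet> b) * Q \<rho> f (displace \<xi> (Xw b G))
       - complex_of_real (fst k \<bullet> b) * Q \<rho> f (displace \<xi> (iter_partial [b] G))"
      unfolding Q_cmult_right[OF op f sX[OF b]] Q_cmult_right[OF op f sP[OF b]] .
  qed
  also have "Q \<rho> f (\<lambda>y. \<i> * complex_of_real (c1 \<xi> k) * displace \<xi> G y) = \<i> * complex_of_real (c1 \<xi> k) * Q \<rho> f (displace \<xi> G)"
    by (simp add: Q_cmult_right[OF op] s0 f)
  finally show ?thesis by simp
qed

lemma DB_expand:
  assumes F: "schwartz F" and G: "schwartz G"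
  shows "DB \<rho> F G z v =
     (\<Sum>b\<in>Basis. - \<i> * complex_of_real (snd (fst v) \<bullet> b) * Bf \<rho> (Xw b F) G z
        - complex_of_real (fst (fst v) \<bullet> b) * Bf \<rho> (iter_partial [b] F) G z)
     - \<i> * complex_of_real (c1 (fst z) (fst v)) * Bf \<rho> F G z
     + ((\<Sum>b\<in>Basis. \<i> * complex_of_real (snd (snd v) \<bullet> b) * Bf \<rho> F (Xw b G) z
        - complex_of_real (fst (snd v) \<bullet> b) * Bf \<rho> F (iter_partial [b] G) z)
     + \<i> * complex_of_real (c1 (snd z) (snd v)) * Bf \<rho> F G z)"
  unfolding DB_def Q_U_left[OF F disp_sq[OF G]] Q_U_right[OF G disp_sq[OF F]] Bf_def ..

lemma kxw: "0 \<le> (K::real) \<Longrightarrow> 0 \<le> W \<Longrightarrow> x \<le> y \<Longrightarrow> K * x * W \<le> K * W * y"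
proof -
  assume a: "0 \<le> K" "0 \<le> W" "x \<le> y"
  have "K * x * W = (K * W) * x" by (simp add: mult_ac)
  also have "\<dots> \<le> (K * W) * y" using a by (intro mult_left_mono) auto
  finally show ?thesis .
qed

lemma prod3: "0 \<le> (C::real) \<Longrightarrow> 0 \<le> a \<Longrightarrow> a \<le> A \<Longrightarrow> 0 \<le> b \<Longrightarrow> b \<le> B \<Longrightarrow> C * a * b \<le> C * A * B"
  by (metis mult_left_mono mult_mono order_trans mult.assoc mult_nonneg_nonneg)

lemma Bf_deriv:
  fixes F G :: "real^'n \<Rightarrow> complex"
  assumes F: "schwartz F" and G: "schwartz G"
  shows "(Bf \<rho> F G has_derivative DB \<rho> F G z) (at z)"
proof -
  obtain Cq where Cq0: "Cq \<ge> 0" and Cq: "\<And>f g. sq_int f \<Longrightarrow> sq_int g \<Longrightarrow> norm (Q \<rho> f g) \<le> Cq * l2_norm f * l2_norm g"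
    using Q_bound[OF op] by blast
  define \<alpha> where "\<alpha> = fst z"
  define \<beta> where "\<beta> = snd z"
  define Wn where "Wn = Wc TYPE('n)"
  have Wn0: "0 \<le> Wn" unfolding Wn_def by (rule Wc_nonneg)
  obtain Ka where Ka0: "Ka \<ge> 0" and Ka: "\<And>h. norm h \<le> 1 \<Longrightarrow>
     sq_int (\<lambda>y. displace (\<alpha> + h) F y - displace \<alpha> F y - U F \<alpha> h y) \<and>
     l2_norm (\<lambda>y. displace (\<alpha> + h) F y - displace \<alpha> F y - U F \<alpha> h y) \<le> Ka * (norm h)^2 * Wn \<and>
     sq_int (\<lambda>y. displace (\<alpha> + h) F y - displace \<alpha> F y) \<and>
     l2_norm (\<lambda>y. displace (\<alpha> + h) F y - displace \<alpha> F y) \<le> Ka * norm h * Wn \<and>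
     sq_int (U F \<alpha> h) \<and> l2_norm (U F \<alpha> h) \<le> Ka * norm h * Wn"
    unfolding Wn_def using disp_est_l2[OF F, of \<alpha>] by blast
  obtain Kb where Kb0: "Kb \<ge> 0" and Kb: "\<And>h. norm h \<le> 1 \<Longrightarrow>
     sq_int (\<lambda>y. displace (\<beta> + h) G y - displace \<beta> G y - U G \<beta> h y) \<and>
     l2_norm (\<lambda>y. displace (\<beta> + h) G y - displace \<beta> G y - U G \<beta> h y) \<le> Kb * (norm h)^2 * Wn \<and>
     sq_int (\<lambda>y. displace (\<beta> + h) G y - displace \<beta> G y) \<and>
     l2_norm (\<lambda>y. displace (\<beta> + h) G y - displace \<beta> G y) \<le> Kb * norm h * Wn \<and>
     sq_int (U G \<beta> h) \<and> l2_norm (U G \<beta> h) \<le> Kb * norm h * Wn"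
    unfolding Wn_def using disp_est_l2[OF G, of \<beta>] by blast
  obtain CF where CF0: "CF \<ge> 0" and CF: "\<And>\<xi>. l2_norm (displace \<xi> F) \<le> CF * (1 + norm \<xi>)^CARD('n) * Wn"
    unfolding Wn_def using disp_l2[OF F] by blast
  obtain CG where CG0: "CG \<ge> 0" and CG: "\<And>\<xi>. l2_norm (displace \<xi> G) \<le> CG * (1 + norm \<xi>)^CARD('n) * Wn"
    unfolding Wn_def using disp_l2[OF G] by blast
  define NF where "NF = CF * (1 + norm \<alpha>)^CARD('n) * Wn"
  define NG where "NG = CG * (2 + norm \<beta>)^CARD('n) * Wn"
  have NG: "l2_norm (displace (\<beta> + k) G) \<le> NG" if "norm k \<le> 1" for k
  proof -
    have "norm (\<beta> + k) \<le> norm \<beta> + 1" using that norm_triangle_ineq[of \<beta> k] by linarith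
    then have "(1 + norm (\<beta> + k))^CARD('n) \<le> (2 + norm \<beta>)^CARD('n)" by (intro power_mono) auto
    then have "CG * (1 + norm (\<beta> + k))^CARD('n) * Wn \<le> NG" unfolding NG_def
      using CG0 Wn0 by (intro mult_right_mono mult_left_mono) auto
    then show ?thesis using CG[of "\<beta> + k"] by linarith
  qed
  define M where "M = Cq * (Ka * Wn) * NG + Cq * (Ka * Wn) * (Kb * Wn) + Cq * NF * (Kb * Wn)"
  have M0: "0 \<le> M" unfolding M_def NF_def NG_def using Cq0 Ka0 Kb0 CF0 CG0 Wn0 by simp
  have main: "norm (Bf \<rho> F G (z + v) - Bf \<rho> F G z - DB \<rho> F G z v) \<le> M * (norm v)^2" if v: "norm v \<le> 1" for v
  proof -
    define h where "h = fst v"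
    define k where "k = snd v"
    have hv: "norm h \<le> norm v" "norm k \<le> norm v" unfolding h_def k_def
      using norm_fst_le[of "fst v" "snd v"] norm_snd_le[of "snd v" "fst v"] by auto
    have h1: "norm h \<le> 1" "norm k \<le> 1" using hv v by auto
    define dA where "dA = displace (\<alpha> + h) F"
    define dA0 where "dA0 = displace \<alpha> F"
    define Uh where "Uh = U F \<alpha> h"
    define dB where "dB = displace (\<beta> + k) G"
    define dB0 where "dB0 = displace \<beta> G"
    define Uk where "Uk = U G \<beta> k"
    have s: "sq_int dA" "sq_int dA0" "sq_int Uh" "sq_int dB" "sq_int dB0" "sq_int Uk"
      unfolding dA_def dA0_def Uh_def dB_def dB0_def Uk_def by (auto intro: disp_sq U_sq F G)
    have sR1: "sq_int (\<lambda>y. dA y - dA0 y)" using s by (intro sq_int_diff)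
    have sR2: "sq_int (\<lambda>y. dB y - dB0 y)" using s by (intro sq_int_diff)
    have e1: "Q \<rho> (\<lambda>y. dA y - dA0 y - Uh y) dB = Q \<rho> dA dB - Q \<rho> dA0 dB - Q \<rho> Uh dB"
      using Q_diff_left[OF op sR1 s(3) s(4)] Q_diff_left[OF op s(1) s(2) s(4)] by simp
    have e2: "Q \<rho> Uh (\<lambda>y. dB y - dB0 y) = Q \<rho> Uh dB - Q \<rho> Uh dB0"
      using Q_diff_right[OF op s(3) s(4) s(5)] by simp
    have e3: "Q \<rho> dA0 (\<lambda>y. dB y - dB0 y - Uk y) = Q \<rho> dA0 dB - Q \<rho> dA0 dB0 - Q \<rho> dA0 Uk"
      using Q_diff_right[OF op s(2) sR2 s(6)] Q_diff_right[OF op s(2) s(4) s(5)] by simp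
    have ident: "Bf \<rho> F G (z + v) - Bf \<rho> F G z - DB \<rho> F G z v =
        Q \<rho> (\<lambda>y. dA y - dA0 y - Uh y) dB + Q \<rho> Uh (\<lambda>y. dB y - dB0 y) + Q \<rho> dA0 (\<lambda>y. dB y - dB0 y - Uk y)"
    proof -
      have b1: "Bf \<rho> F G (z + v) = Q \<rho> dA dB" unfolding Bf_def dA_def dB_def \<alpha>_def \<beta>_def h_def k_def by simp
      have b2: "Bf \<rho> F G z = Q \<rho> dA0 dB0" unfolding Bf_def dA0_def dB0_def \<alpha>_def \<beta>_def by simp
      have b3: "DB \<rho> F G z v = Q \<rho> Uh dB0 + Q \<rho> dA0 Uk" unfolding DB_def Uh_def dB0_def dA0_def Uk_def \<alpha>_def \<beta>_def h_def k_def by simp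
      show ?thesis unfolding b1 b2 b3 e1 e2 e3 by (simp add: algebra_simps)
    qed
    have KA: "sq_int (\<lambda>y. dA y - dA0 y - Uh y)" "l2_norm (\<lambda>y. dA y - dA0 y - Uh y) \<le> Ka * (norm h)^2 * Wn"
      "l2_norm Uh \<le> Ka * norm h * Wn"
      unfolding dA_def dA0_def Uh_def using Ka[OF h1(1)] by auto
    have KB: "sq_int (\<lambda>y. dB y - dB0 y - Uk y)" "l2_norm (\<lambda>y. dB y - dB0 y - Uk y) \<le> Kb * (norm k)^2 * Wn"
      "l2_norm (\<lambda>y. dB y - dB0 y) \<le> Kb * norm k * Wn"
      unfolding dB_def dB0_def Uk_def using Kb[OF h1(2)] by auto
    have nv: "0 \<le> norm v" by simp
    have sq: "(norm h)^2 \<le> (norm v)^2" "(norm k)^2 \<le> (norm v)^2" using hv by (auto intro: power_mono)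
    have t1: "norm (Q \<rho> (\<lambda>y. dA y - dA0 y - Uh y) dB) \<le> Cq * (Ka * Wn * (norm v)^2) * NG"
    proof -
      have "norm (Q \<rho> (\<lambda>y. dA y - dA0 y - Uh y) dB) \<le> Cq * l2_norm (\<lambda>y. dA y - dA0 y - Uh y) * l2_norm dB"
        by (rule Cq[OF KA(1) s(4)])
      also have "\<dots> \<le> Cq * (Ka * Wn * (norm v)^2) * NG"
      proof (rule prod3[OF Cq0 l2_norm_nonneg _ l2_norm_nonneg])
        show "l2_norm (\<lambda>y. dA y - dA0 y - Uh y) \<le> Ka * Wn * (norm v)^2"
          using KA(2) kxw[OF Ka0 Wn0 sq(1)] by linarith
        show "l2_norm dB \<le> NG" unfolding dB_def by (rule NG[OF h1(2)])
      qed
      finally show ?thesis .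
    qed
    have t2: "norm (Q \<rho> Uh (\<lambda>y. dB y - dB0 y)) \<le> Cq * (Ka * Wn * norm v) * (Kb * Wn * norm v)"
    proof -
      have "norm (Q \<rho> Uh (\<lambda>y. dB y - dB0 y)) \<le> Cq * l2_norm Uh * l2_norm (\<lambda>y. dB y - dB0 y)"
        by (rule Cq[OF s(3) sR2])
      also have "\<dots> \<le> Cq * (Ka * Wn * norm v) * (Kb * Wn * norm v)"
      proof (rule prod3[OF Cq0 l2_norm_nonneg _ l2_norm_nonneg])
        show "l2_norm Uh \<le> Ka * Wn * norm v"
          using KA(3) kxw[OF Ka0 Wn0 hv(1)] by linarith
        show "l2_norm (\<lambda>y. dB y - dB0 y) \<le> Kb * Wn * norm v"
          using KB(3) kxw[OF Kb0 Wn0 hv(2)] by linarith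
      qed
      finally show ?thesis .
    qed
    have t3: "norm (Q \<rho> dA0 (\<lambda>y. dB y - dB0 y - Uk y)) \<le> Cq * NF * (Kb * Wn * (norm v)^2)"
    proof -
      have "norm (Q \<rho> dA0 (\<lambda>y. dB y - dB0 y - Uk y)) \<le> Cq * l2_norm dA0 * l2_norm (\<lambda>y. dB y - dB0 y - Uk y)"
        by (rule Cq[OF s(2) KB(1)])
      also have "\<dots> \<le> Cq * NF * (Kb * Wn * (norm v)^2)"
      proof (rule prod3[OF Cq0 l2_norm_nonneg _ l2_norm_nonneg])
        show "l2_norm dA0 \<le> NF" unfolding dA0_def NF_def by (rule CF)
        show "l2_norm (\<lambda>y. dB y - dB0 y - Uk y) \<le> Kb * Wn * (norm v)^2"
          using KB(2) kxw[OF Kb0 Wn0 sq(2)] by linarith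
      qed
      finally show ?thesis .
    qed
    have "norm (Bf \<rho> F G (z + v) - Bf \<rho> F G z - DB \<rho> F G z v)
        \<le> norm (Q \<rho> (\<lambda>y. dA y - dA0 y - Uh y) dB) + norm (Q \<rho> Uh (\<lambda>y. dB y - dB0 y)) + norm (Q \<rho> dA0 (\<lambda>y. dB y - dB0 y - Uk y))"
    proof -
      define X1 where "X1 = Q \<rho> (\<lambda>y. dA y - dA0 y - Uh y) dB"
      define X2 where "X2 = Q \<rho> Uh (\<lambda>y. dB y - dB0 y)"
      define X3 where "X3 = Q \<rho> dA0 (\<lambda>y. dB y - dB0 y - Uk y)"
      have "norm (X1 + X2 + X3) \<le> norm (X1 + X2) + norm X3" by (rule norm_triangle_ineq)
      moreover have "norm (X1 + X2) \<le> norm X1 + norm X2" by (rule norm_triangle_ineq)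
      ultimately show ?thesis unfolding ident X1_def[symmetric] X2_def[symmetric] X3_def[symmetric] by linarith
    qed
    also have "\<dots> \<le> Cq * (Ka * Wn * (norm v)^2) * NG + Cq * (Ka * Wn * norm v) * (Kb * Wn * norm v) + Cq * NF * (Kb * Wn * (norm v)^2)"
      using t1 t2 t3 by linarith
    also have "\<dots> = M * (norm v)^2" unfolding M_def by (simp add: algebra_simps power2_eq_square)
    finally show ?thesis .
  qed
  show ?thesis
    unfolding has_derivative_at_alt
  proof (intro conjI allI impI)
    show "bounded_linear (DB \<rho> F G z)" by (rule DB_linear[OF F G])
    fix e :: real assume e: "e > 0"
    show "\<exists>d>0. \<forall>y. norm (y - z) < d \<longrightarrow> norm (Bf \<rho> F G y - Bf \<rho> F G z - DB \<rho> F G z (y - z)) \<le> e * norm (y - z)"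
    proof (intro exI[of _ "min 1 (e / (M + 1))"] conjI allI impI)
      show "0 < min 1 (e / (M + 1))" using e M0 by simp
      fix y assume y: "norm (y - z) < min 1 (e / (M + 1))"
      define v where "v = y - z"
      have v1: "norm v \<le> 1" using y unfolding v_def by simp
      have v2: "norm v \<le> e / (M + 1)" using y unfolding v_def by simp
      have "norm (Bf \<rho> F G y - Bf \<rho> F G z - DB \<rho> F G z (y - z)) \<le> M * (norm v)^2"
        using main[OF v1] unfolding v_def by simp
      also have "\<dots> = (M * norm v) * norm v" by (simp add: power2_eq_square mult_ac)
      also have "\<dots> \<le> e * norm v"
      proof (rule mult_right_mono)
        have "M * norm v \<le> M * (e / (M + 1))" using v2 M0 by (rule mult_left_mono)
        also have "\<dots> \<le> e" using M0 e by (simp add: field_simps)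
        finally show "M * norm v \<le> e" .
      qed simp
      finally show "norm (Bf \<rho> F G y - Bf \<rho> F G z - DB \<rho> F G z (y - z)) \<le> e * norm (y - z)" unfolding v_def .
    qed
  qed
qed

lemma Bf_PB:
  fixes F G :: "real^'n \<Rightarrow> complex"
  assumes F: "schwartz F" and G: "schwartz G"
  shows "PB (Bf \<rho> F G)"
proof -
  obtain Cq where Cq0: "Cq \<ge> 0" and Cq: "\<And>f g. sq_int f \<Longrightarrow> sq_int g \<Longrightarrow> norm (Q \<rho> f g) \<le> Cq * l2_norm f * l2_norm g"
    using Q_bound[OF op] by blast
  define Wn where "Wn = Wc TYPE('n)"
  have Wn0: "0 \<le> Wn" unfolding Wn_def by (rule Wc_nonneg)
  obtain CF where CF0: "CF \<ge> 0" and CF: "\<And>\<xi>. l2_norm (displace \<xi> F) \<le> CF * (1 + norm \<xi>)^CARD('n) * Wn"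
    unfolding Wn_def using disp_l2[OF F] by blast
  obtain CG where CG0: "CG \<ge> 0" and CG: "\<And>\<xi>. l2_norm (displace \<xi> G) \<le> CG * (1 + norm \<xi>)^CARD('n) * Wn"
    unfolding Wn_def using disp_l2[OF G] by blast
  show ?thesis unfolding PB_def
  proof (intro exI allI)
    fix z :: "'n zz"
    have pz: "(1 + norm (fst z))^CARD('n) \<le> (1 + norm z)^CARD('n)" "(1 + norm (snd z))^CARD('n) \<le> (1 + norm z)^CARD('n)"
      using norm_fst_le[of "fst z" "snd z"] norm_snd_le[of "snd z" "fst z"] by (auto intro!: power_mono)
    have "norm (Bf \<rho> F G z) \<le> Cq * l2_norm (displace (fst z) F) * l2_norm (displace (snd z) G)"
      unfolding Bf_def by (rule Cq[OF disp_sq[OF F] disp_sq[OF G]])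
    also have "\<dots> \<le> Cq * (CF * (1 + norm z)^CARD('n) * Wn) * (CG * (1 + norm z)^CARD('n) * Wn)"
    proof (rule prod3[OF Cq0 l2_norm_nonneg _ l2_norm_nonneg])
      show "l2_norm (displace (fst z) F) \<le> CF * (1 + norm z)^CARD('n) * Wn"
        using CF[of "fst z"] pz(1) CF0 Wn0 by (meson mult_left_mono mult_right_mono order_trans)
      show "l2_norm (displace (snd z) G) \<le> CG * (1 + norm z)^CARD('n) * Wn"
        using CG[of "snd z"] pz(2) CG0 Wn0 by (meson mult_left_mono mult_right_mono order_trans)
    qed
    also have "\<dots> = (Cq * CF * CG * Wn * Wn) * (1 + norm z)^(CARD('n) + CARD('n))"
      by (simp add: power_add mult_ac)
    finally show "norm (Bf \<rho> F G z) \<le> (Cq * CF * CG * Wn * Wn) * (1 + norm z)^(CARD('n) + CARD('n))" .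
  qed
qed

end


inductive_set Cls :: "('n::finite) rop \<Rightarrow> ('n zz \<Rightarrow> complex) set" for \<rho> where
  base: "schwartz F \<Longrightarrow> schwartz G \<Longrightarrow> Bf \<rho> F G \<in> Cls \<rho>"
| add: "A \<in> Cls \<rho> \<Longrightarrow> B \<in> Cls \<rho> \<Longrightarrow> (\<lambda>z. A z + B z) \<in> Cls \<rho>"
| cmul: "A \<in> Cls \<rho> \<Longrightarrow> (\<lambda>z. c * A z) \<in> Cls \<rho>"
| coord: "A \<in> Cls \<rho> \<Longrightarrow> (\<lambda>z. complex_of_real (z \<bullet> w) * A z) \<in> Cls \<rho>"
| const: "(\<lambda>z. c) \<in> Cls \<rho>"

lemma Cls_sum: "finite I \<Longrightarrow> (\<And>i. i \<in> I \<Longrightarrow> A i \<in> Cls \<rho>) \<Longrightarrow> (\<lambda>z. \<Sum>i\<in>I. A i z) \<in> Cls \<rho>"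
proof (induction I rule: finite_induct)
  case empty
  then show ?case using Cls.const[of 0 \<rho>] by simp
next
  case (insert a I)
  then show ?case by (simp add: Cls.add)
qed

lemma Cls_diff: "A \<in> Cls \<rho> \<Longrightarrow> B \<in> Cls \<rho> \<Longrightarrow> (\<lambda>z. A z - B z) \<in> Cls \<rho>"
  using Cls.add[OF _ Cls.cmul[of B \<rho> "-1"], of A] by simp

lemma PB_nonneg: "(\<And>z. norm (f z) \<le> C * (1 + norm z)^N) \<Longrightarrow> 0 \<le> C"
proof -
  assume "\<And>z. norm (f z) \<le> C * (1 + norm z)^N"
  from this[of 0] have "norm (f 0) \<le> C" by simp
  then show ?thesis by (meson norm_ge_zero order_trans)
qed

lemma pow_mono1: "N \<le> M \<Longrightarrow> (1 + norm z)^N \<le> (1 + norm (z::'a::real_normed_vector))^M"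
  by (rule power_increasing) auto

lemma PB_add:
  fixes f g :: "'a::real_normed_vector \<Rightarrow> complex"
  assumes "PB f" "PB g"
  shows "PB (\<lambda>z. f z + g z)"
proof -
  obtain C1 N1 where C1: "\<And>z. norm (f z) \<le> C1 * (1 + norm z)^N1" using assms(1) unfolding PB_def by blast
  obtain C2 N2 where C2: "\<And>z. norm (g z) \<le> C2 * (1 + norm z)^N2" using assms(2) unfolding PB_def by blast
  have c: "0 \<le> C1" "0 \<le> C2" using PB_nonneg C1 C2 by blast+
  show ?thesis unfolding PB_def
  proof (intro exI allI)
    fix z :: 'a
    have "norm (f z + g z) \<le> norm (f z) + norm (g z)" by (rule norm_triangle_ineq)
    also have "\<dots> \<le> C1 * (1 + norm z)^(N1 + N2) + C2 * (1 + norm z)^(N1 + N2)"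
    proof (rule add_mono)
      show "norm (f z) \<le> C1 * (1 + norm z)^(N1 + N2)"
        using C1[of z] mult_left_mono[OF pow_mono1[of N1 "N1 + N2" z] c(1)] by linarith
      show "norm (g z) \<le> C2 * (1 + norm z)^(N1 + N2)"
        using C2[of z] mult_left_mono[OF pow_mono1[of N2 "N1 + N2" z] c(2)] by linarith
    qed
    also have "\<dots> = (C1 + C2) * (1 + norm z)^(N1 + N2)" by (simp add: algebra_simps)
    finally show "norm (f z + g z) \<le> (C1 + C2) * (1 + norm z)^(N1 + N2)" .
  qed
qed

lemma PB_cmult:
  fixes f :: "'a::real_normed_vector \<Rightarrow> complex"
  assumes "PB f"
  shows "PB (\<lambda>z. c * f z)"
proof -
  obtain C N where C: "\<And>z. norm (f z) \<le> C * (1 + norm z)^N" using assms unfolding PB_def by blast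
  show ?thesis unfolding PB_def
  proof (intro exI allI)
    fix z
    have "norm (c * f z) = norm c * norm (f z)" by (simp add: norm_mult)
    also have "\<dots> \<le> norm c * (C * (1 + norm z)^N)" by (intro mult_left_mono C) auto
    finally show "norm (c * f z) \<le> (norm c * C) * (1 + norm z)^N" by (simp add: mult.assoc)
  qed
qed

lemma PB_coord:
  fixes f :: "'a::real_inner \<Rightarrow> complex"
  assumes "PB f"
  shows "PB (\<lambda>z. complex_of_real (z \<bullet> w) * f z)"
proof -
  obtain C N where C: "\<And>z. norm (f z) \<le> C * (1 + norm z)^N" using assms unfolding PB_def by blast
  have c: "0 \<le> C" using PB_nonneg C by blast
  show ?thesis unfolding PB_def
  proof (intro exI allI)
    fix z :: 'a
    have zw: "\<bar>z \<bullet> w\<bar> \<le> norm w * (1 + norm z)"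
    proof -
      have "\<bar>z \<bullet> w\<bar> \<le> norm z * norm w" by (rule Cauchy_Schwarz_ineq2)
      also have "\<dots> \<le> (1 + norm z) * norm w" by (intro mult_right_mono) auto
      finally show ?thesis by (simp add: mult.commute)
    qed
    have "norm (complex_of_real (z \<bullet> w) * f z) = \<bar>z \<bullet> w\<bar> * norm (f z)" by (simp add: norm_mult)
    also have "\<dots> \<le> (norm w * (1 + norm z)) * (C * (1 + norm z)^N)"
      by (intro mult_mono zw C) auto
    also have "\<dots> = (norm w * C) * (1 + norm z)^(Suc N)" by (simp add: mult_ac)
    finally show "norm (complex_of_real (z \<bullet> w) * f z) \<le> (norm w * C) * (1 + norm z)^(Suc N)" .
  qed
qed

lemma PB_const: "PB (\<lambda>z. c)"
  unfolding PB_def by (rule exI[of _ "norm c"], rule exI[of _ 0]) simp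

lemma fd_eq: "(f has_derivative f') (at z) \<Longrightarrow> frechet_derivative f (at z) = f'"
  using frechet_derivative_at by metis

lemma c1_inner1: "c1 (fst z) (fst v) = z \<bullet> (((1/2) *\<^sub>R snd (fst v), - (1/2) *\<^sub>R fst (fst v)), (0, 0))"
  by (cases z) (auto simp: c1_def inner_commute field_simps)

lemma c1_inner2: "c1 (snd z) (snd v) = z \<bullet> ((0, 0), ((1/2) *\<^sub>R snd (snd v), - (1/2) *\<^sub>R fst (snd v)))"
  by (cases z) (auto simp: c1_def inner_commute field_simps)

lemma Cls_props:
  fixes \<rho> :: "('n::finite) rop"
  assumes op: "l2_bounded_operator \<rho>"
  shows "A \<in> Cls \<rho> \<Longrightarrow> (\<forall>z. A differentiable (at z)) \<and> (\<forall>v. (\<lambda>z. frechet_derivative A (at z) v) \<in> Cls \<rho>) \<and> PB A"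
proof (induction rule: Cls.induct)
  case (base F G)
  have d: "\<And>z. (Bf \<rho> F G has_derivative DB \<rho> F G z) (at z)" by (rule Bf_deriv[OF op base.hyps])
  have fd: "\<And>z. frechet_derivative (Bf \<rho> F G) (at z) = DB \<rho> F G z" using d by (rule fd_eq)
  have cls: "(\<lambda>z. DB \<rho> F G z v) \<in> Cls \<rho>" for v
  proof -
    define w1 where "w1 = (((1/2) *\<^sub>R snd (fst v), - (1/2) *\<^sub>R fst (fst v)), (0::real^'n, 0::real^'n))"
    define w2 where "w2 = ((0::real^'n, 0::real^'n), ((1/2) *\<^sub>R snd (snd v), - (1/2) *\<^sub>R fst (snd v)))"
    have e: "(\<lambda>z. DB \<rho> F G z v) = (\<lambda>z.
       (\<Sum>b\<in>Basis. (- \<i> * complex_of_real (snd (fst v) \<bullet> b)) * Bf \<rho> (Xw b F) G z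
          - complex_of_real (fst (fst v) \<bullet> b) * Bf \<rho> (iter_partial [b] F) G z)
       + (- \<i>) * (complex_of_real (z \<bullet> w1) * Bf \<rho> F G z)
       + ((\<Sum>b\<in>Basis. (\<i> * complex_of_real (snd (snd v) \<bullet> b)) * Bf \<rho> F (Xw b G) z
          - complex_of_real (fst (snd v) \<bullet> b) * Bf \<rho> F (iter_partial [b] G) z)
       + \<i> * (complex_of_real (z \<bullet> w2) * Bf \<rho> F G z)))"
    proof (rule ext)
      fix z
      show "DB \<rho> F G z v = (\<Sum>b\<in>Basis. (- \<i> * complex_of_real (snd (fst v) \<bullet> b)) * Bf \<rho> (Xw b F) G z
          - complex_of_real (fst (fst v) \<bullet> b) * Bf \<rho> (iter_partial [b] F) G z)
       + (- \<i>) * (complex_of_real (z \<bullet> w1) * Bf \<rho> F G z)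
       + ((\<Sum>b\<in>Basis. (\<i> * complex_of_real (snd (snd v) \<bullet> b)) * Bf \<rho> F (Xw b G) z
          - complex_of_real (fst (snd v) \<bullet> b) * Bf \<rho> F (iter_partial [b] G) z)
       + \<i> * (complex_of_real (z \<bullet> w2) * Bf \<rho> F G z))"
        unfolding DB_expand[OF op base.hyps] w1_def w2_def c1_inner1[symmetric] c1_inner2[symmetric]
        by (simp add: algebra_simps)
    qed
    have bX: "\<And>b. b \<in> Basis \<Longrightarrow> Bf \<rho> (Xw b F) G \<in> Cls \<rho>" by (intro Cls.base schwartz_Xw base.hyps)
    have bP: "\<And>b. b \<in> Basis \<Longrightarrow> Bf \<rho> (iter_partial [b] F) G \<in> Cls \<rho>" by (intro Cls.base schwartz_partial base.hyps)
    have bX': "\<And>b. b \<in> Basis \<Longrightarrow> Bf \<rho> F (Xw b G) \<in> Cls \<rho>" by (intro Cls.base schwartz_Xw base.hyps)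
    have bP': "\<And>b. b \<in> Basis \<Longrightarrow> Bf \<rho> F (iter_partial [b] G) \<in> Cls \<rho>" by (intro Cls.base schwartz_partial base.hyps)
    have b0: "Bf \<rho> F G \<in> Cls \<rho>" by (intro Cls.base base.hyps)
    show ?thesis unfolding e
      by (intro Cls.add Cls_sum finite_Basis Cls_diff Cls.cmul Cls.coord bX bP bX' bP' b0)
  qed
  show ?case
  proof (intro conjI allI)
    show "Bf \<rho> F G differentiable (at z)" for z using d unfolding differentiable_def by blast
    show "(\<lambda>z. frechet_derivative (Bf \<rho> F G) (at z) v) \<in> Cls \<rho>" for v unfolding fd by (rule cls)
    show "PB (Bf \<rho> F G)" by (rule Bf_PB[OF op base.hyps])
  qed
next
  case (add A B)
  have dA: "\<And>z. (A has_derivative frechet_derivative A (at z)) (at z)" using add.IH frechet_derivative_works by blast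
  have dB: "\<And>z. (B has_derivative frechet_derivative B (at z)) (at z)" using add.IH frechet_derivative_works by blast
  have d: "\<And>z. ((\<lambda>z. A z + B z) has_derivative (\<lambda>v. frechet_derivative A (at z) v + frechet_derivative B (at z) v)) (at z)"
    by (intro has_derivative_add dA dB)
  show ?case
  proof (intro conjI allI)
    show "(\<lambda>z. A z + B z) differentiable (at z)" for z using d unfolding differentiable_def by blast
    show "(\<lambda>z. frechet_derivative (\<lambda>z. A z + B z) (at z) v) \<in> Cls \<rho>" for v
    proof -
      have "(\<lambda>z. frechet_derivative A (at z) v) \<in> Cls \<rho>" "(\<lambda>z. frechet_derivative B (at z) v) \<in> Cls \<rho>"
        using add.IH by blast+
      then show ?thesis unfolding fd_eq[OF d] by (rule Cls.add)
    qed
    show "PB (\<lambda>z. A z + B z)" using add.IH by (intro PB_add) blast+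
  qed
next
  case (cmul A c)
  have dA: "\<And>z. (A has_derivative frechet_derivative A (at z)) (at z)" using cmul.IH frechet_derivative_works by blast
  have d: "\<And>z. ((\<lambda>z. c * A z) has_derivative (\<lambda>v. c * frechet_derivative A (at z) v)) (at z)"
    by (intro has_derivative_mult_right dA)
  show ?case
  proof (intro conjI allI)
    show "(\<lambda>z. c * A z) differentiable (at z)" for z using d unfolding differentiable_def by blast
    show "(\<lambda>z. frechet_derivative (\<lambda>z. c * A z) (at z) v) \<in> Cls \<rho>" for v
    proof -
      have "(\<lambda>z. frechet_derivative A (at z) v) \<in> Cls \<rho>" using cmul.IH by blast
      then show ?thesis unfolding fd_eq[OF d] by (rule Cls.cmul)
    qed
    show "PB (\<lambda>z. c * A z)" using cmul.IH by (intro PB_cmult) blast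
  qed
next
  case (coord A w)
  have dA: "\<And>z. (A has_derivative frechet_derivative A (at z)) (at z)" using coord.IH frechet_derivative_works by blast
  have d: "\<And>z. ((\<lambda>z. complex_of_real (z \<bullet> w) * A z) has_derivative
      (\<lambda>v. complex_of_real (z \<bullet> w) * frechet_derivative A (at z) v + complex_of_real (v \<bullet> w) * A z)) (at z)"
    by (intro has_derivative_mult coord_has_derivative dA)
  show ?case
  proof (intro conjI allI)
    show "(\<lambda>z. complex_of_real (z \<bullet> w) * A z) differentiable (at z)" for z using d unfolding differentiable_def by blast
    show "(\<lambda>z. frechet_derivative (\<lambda>z. complex_of_real (z \<bullet> w) * A z) (at z) v) \<in> Cls \<rho>" for v
    proof -
      have "(\<lambda>z. frechet_derivative A (at z) v) \<in> Cls \<rho>" using coord.IH by blast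
      then show ?thesis unfolding fd_eq[OF d] by (intro Cls.add Cls.coord Cls.cmul coord.hyps)
    qed
    show "PB (\<lambda>z. complex_of_real (z \<bullet> w) * A z)" using coord.IH by (intro PB_coord) blast
  qed
next
  case (const c)
  have d: "\<And>z. ((\<lambda>z. c) has_derivative (\<lambda>v. 0)) (at z)" by (rule has_derivative_const)
  show ?case
  proof (intro conjI allI)
    show "(\<lambda>z. c) differentiable (at z)" for z using d unfolding differentiable_def by blast
    show "(\<lambda>z. frechet_derivative (\<lambda>z. c) (at z) v) \<in> Cls \<rho>" for v
      unfolding fd_eq[OF d] by (rule Cls.const)
    show "PB (\<lambda>z. c)" by (rule PB_const)
  qed
qed


theorem corollary2:
  fixes \<rho> :: "(real^'n \<Rightarrow> complex) \<Rightarrow> (real^'n \<Rightarrow> complex)"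
    and chi :: "real^'n \<Rightarrow> complex"
  assumes "quantum_state \<rho>"
    and "schwartz chi"
    and "l2_norm chi = 1"
    and "rapidly_decaying (matrix_elem \<rho> chi)"
  shows "schwartz (matrix_elem \<rho> chi)"
proof -
  have op: "l2_bounded_operator \<rho>"
    using assms(1) unfolding quantum_state_def l2_positive_trace_class_def by blast
  have Meq: "matrix_elem \<rho> chi = Bf \<rho> chi chi"
    by (rule ext) (simp add: matrix_elem_def Bf_def Q_def split: prod.split)
  define M where "M = matrix_elem \<rho> chi"
  have MC: "M \<in> Cls \<rho>" unfolding M_def Meq by (rule Cls.base[OF assms(2) assms(2)])
  have P: "\<And>A. A \<in> Cls \<rho> \<Longrightarrow> (\<forall>z. A differentiable (at z)) \<and> (\<forall>v. (\<lambda>z. frechet_derivative A (at z) v) \<in> Cls \<rho>) \<and> PB A"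
    by (rule Cls_props[OF op])
  have allC: "iter_partial vs M \<in> Cls \<rho>" for vs
  proof (induction vs)
    case Nil
    then show ?case using MC by simp
  next
    case (Cons v vs)
    have "(\<lambda>z. frechet_derivative (iter_partial vs M) (at z) v) \<in> Cls \<rho>" using P[OF Cons] by blast
    then show ?case by simp
  qed
  have RDall: "set vs \<subseteq> Basis \<Longrightarrow> RD (iter_partial vs M)" for vs
  proof (induction vs)
    case Nil
    have "RD M" unfolding M_def
      by (rule rd_from_monomial) (use assms(4) in \<open>simp add: rapidly_decaying_def\<close>)
    then show ?case by simp
  next
    case (Cons v vs)
    define G where "G = iter_partial vs M"
    have v: "v \<in> Basis" "set vs \<subseteq> Basis" using Cons.prems by auto
    have GC: "G \<in> Cls \<rho>" unfolding G_def by (rule allC)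
    have G1C: "(\<lambda>z. frechet_derivative G (at z) v) \<in> Cls \<rho>" using P[OF GC] by blast
    have G2C: "(\<lambda>z. frechet_derivative (\<lambda>z. frechet_derivative G (at z) v) (at z) v) \<in> Cls \<rho>"
      using P[OF G1C] by blast
    have "RD (\<lambda>z. frechet_derivative G (at z) v)"
    proof (rule interp[where G' = "\<lambda>z. frechet_derivative G (at z)" and G'' = "\<lambda>z. frechet_derivative (\<lambda>z. frechet_derivative G (at z) v) (at z)"])
      show "norm v = 1" using v(1) by simp
      show "(G has_derivative frechet_derivative G (at z)) (at z)" for z
        using P[OF GC] frechet_derivative_works by blast
      show "((\<lambda>z. frechet_derivative G (at z) v) has_derivative frechet_derivative (\<lambda>z. frechet_derivative G (at z) v) (at z)) (at z)" for z
        using P[OF G1C] frechet_derivative_works by blast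
      show "RD G" unfolding G_def by (rule Cons.IH[OF v(2)])
      show "PB (\<lambda>z. frechet_derivative (\<lambda>z. frechet_derivative G (at z) v) (at z) v)" using P[OF G2C] by blast
    qed
    then show ?case unfolding G_def by simp
  qed
  have "schwartz M"
    unfolding schwartz_iff
  proof (intro conjI allI impI)
    fix vs z assume "set vs \<subseteq> (Basis :: 'n zz set)"
    show "iter_partial vs M differentiable (at z)" using P[OF allC[of vs]] by blast
  next
    fix vs assume "set vs \<subseteq> (Basis :: 'n zz set)"
    then show "RD (iter_partial vs M)" by (rule RDall)
  qed
  then show ?thesis unfolding M_def .
qed


end
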